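(* Let $\rho\in\mathbb R$, let $\kappa_{\mathbf a}:\mathbb H_\rho\times\mathbb H_\rho\to\mathbb C$ be a positive semi-definite Dirichlet series kernel with coefficient matrix $\mathbf a=(a_{m,n})$, let $\mathscr H_{\mathbf a}$ be the associated reproducing kernel Hilbert space, and let $A_{n,\mathbf a}$, $n\ge1$, be the analytic symbols of $\mathbf a$. Then: (i) $\kappa_{\mathbf a}(s,u)=\sum_{n=1}^\infty A_{n,\mathbf a}(s)n^{-\bar u}$ for all $s,u\in\mathbb H_\rho$; (ii) every $f\in\mathscr H_{\mathbf a}$ is a Dirichlet series given by $f(s)=\sum_{n=1}^\infty\langle f,A_{n,\mathbf a}\rangle_{\mathscr H_{\mathbf a}}n^{-s}$, $s\in\mathbb H_\rho$; (iii) $\{A_{n,\mathbf a}\}_{n\ge1}$ is a total subset of $\mathscr H_{\mathbf a}$.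
   Context: $\mathbb H_\rho=\{s\in\mathbb C:\Re(s)>\rho\}$. A double Dirichlet series $\sum c_{m,n}m^{-s}n^{-u}$ is regularly convergent at $(s_0,u_0)$ if it converges there and, for all $m,n\ge1$, $\sum_m c_{m,n}m^{-s_0}$ and $\sum_n c_{m,n}n^{-u_0}$ converge. $\kappa_{\mathbf a}(s,u)=\sum_{m,n\ge1}a_{m,n}m^{-s}n^{-\bar u}$ is a Dirichlet series kernel on $\mathbb H_\rho$ if $(s,u)\mapsto\kappa_{\mathbf a}(s,\bar u)$ is regularly convergent on $\mathbb H_\rho\times\mathbb H_\rho$. Positive semi-definite means every finite matrix $(\kappa_{\mathbf a}(s_i,s_j))$ is positive semi-definite. $\mathscr H_{\mathbf a}$ is the Hilbert space of functions on $\mathbb H_\rho$ with $\kappa_{\mathbf a}(\cdot,t)\in\mathscr H_{\mathbf a}$ and $\langle f,\kappa_{\mathbf a}(\cdot,t)\rangle=f(t)$ for all $t$. Analytic symbols: $A_{n,\mathbf a}(s)=\sum_{m\ge1}a_{m,n}m^{-s}$; these belong to $\mathscr H_{\mathbf a}$. A subset is total if its closed linear span is the whole space. *)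

theory Defs
  imports "HOL-Analysis.Analysis"
begin

definition halfplane :: "real \<Rightarrow> complex set" where
  "halfplane \<rho> = {s. Re s > \<rho>}"

text \<open>Dirichlet term n^(-s) (used only for n >= 1).\<close>
definition dpow :: "nat \<Rightarrow> complex \<Rightarrow> complex" where
  "dpow n s = (of_nat n :: complex) powr (- s)"

definition dpsum :: "(nat \<Rightarrow> nat \<Rightarrow> complex) \<Rightarrow> complex \<Rightarrow> complex \<Rightarrow> nat \<times> nat \<Rightarrow> complex" where
  "dpsum c s u = (\<lambda>(M, N). \<Sum>m\<in>{1..M}. \<Sum>n\<in>{1..N}. c m n * dpow m s * dpow n u)"

definition double_converges :: "(nat \<Rightarrow> nat \<Rightarrow> complex) \<Rightarrow> complex \<Rightarrow> complex \<Rightarrow> bool" where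
  "double_converges c s u \<longleftrightarrow> (\<exists>L. (dpsum c s u \<longlongrightarrow> L) (sequentially \<times>\<^sub>F sequentially))"

definition double_sum :: "(nat \<Rightarrow> nat \<Rightarrow> complex) \<Rightarrow> complex \<Rightarrow> complex \<Rightarrow> complex" where
  "double_sum c s u = Lim (sequentially \<times>\<^sub>F sequentially) (dpsum c s u)"

definition regularly_convergent :: "(nat \<Rightarrow> nat \<Rightarrow> complex) \<Rightarrow> complex \<Rightarrow> complex \<Rightarrow> bool" where
  "regularly_convergent c s0 u0 \<longleftrightarrow>
     double_converges c s0 u0 \<and>
     (\<forall>n\<ge>1. summable (\<lambda>m. c (Suc m) n * dpow (Suc m) s0)) \<and>
     (\<forall>m\<ge>1. summable (\<lambda>n. c m (Suc n) * dpow (Suc n) u0))"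

definition dkernel :: "(nat \<Rightarrow> nat \<Rightarrow> complex) \<Rightarrow> complex \<Rightarrow> complex \<Rightarrow> complex" where
  "dkernel a s u = double_sum a s (cnj u)"

definition dirichlet_series_kernel :: "real \<Rightarrow> (nat \<Rightarrow> nat \<Rightarrow> complex) \<Rightarrow> bool" where
  "dirichlet_series_kernel \<rho> a \<longleftrightarrow>
     (\<forall>s\<in>halfplane \<rho>. \<forall>u\<in>halfplane \<rho>. regularly_convergent a s u)"

definition psd_kernel :: "complex set \<Rightarrow> (complex \<Rightarrow> complex \<Rightarrow> complex) \<Rightarrow> bool" where
  "psd_kernel D K \<longleftrightarrow>
     (\<forall>(k::nat) (p::nat \<Rightarrow> complex) (c::nat \<Rightarrow> complex). (\<forall>i<k. p i \<in> D) \<longrightarrow>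
        (let q = (\<Sum>i<k. \<Sum>j<k. cnj (c i) * K (p i) (p j) * c j) in Im q = 0 \<and> Re q \<ge> 0))"

definition analytic_symbol :: "(nat \<Rightarrow> nat \<Rightarrow> complex) \<Rightarrow> nat \<Rightarrow> complex \<Rightarrow> complex" where
  "analytic_symbol a n s = (\<Sum>m. a (Suc m) n * dpow (Suc m) s)"

text \<open>Functions on H_rho are represented as functions on complex vanishing outside H_rho.\<close>
definition restr :: "real \<Rightarrow> (complex \<Rightarrow> complex) \<Rightarrow> complex \<Rightarrow> complex" where
  "restr \<rho> f = (\<lambda>s. if s \<in> halfplane \<rho> then f s else 0)"

definition hnorm :: "((complex \<Rightarrow> complex) \<Rightarrow> (complex \<Rightarrow> complex) \<Rightarrow> complex) \<Rightarrow> (complex \<Rightarrow> complex) \<Rightarrow> real" where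
  "hnorm ip f = sqrt (Re (ip f f))"

definition hilbert_function_space :: "real \<Rightarrow> (complex \<Rightarrow> complex) set \<Rightarrow>
    ((complex \<Rightarrow> complex) \<Rightarrow> (complex \<Rightarrow> complex) \<Rightarrow> complex) \<Rightarrow> bool" where
  "hilbert_function_space \<rho> H ip \<longleftrightarrow>
     (\<forall>f\<in>H. \<forall>s. s \<notin> halfplane \<rho> \<longrightarrow> f s = 0) \<and>
     (\<lambda>s. 0) \<in> H \<and>
     (\<forall>f\<in>H. \<forall>g\<in>H. (\<lambda>s. f s + g s) \<in> H) \<and>
     (\<forall>f\<in>H. \<forall>c. (\<lambda>s. c * f s) \<in> H) \<and>
     (\<forall>f\<in>H. \<forall>g\<in>H. \<forall>h\<in>H. ip (\<lambda>s. f s + g s) h = ip f h + ip g h) \<and>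
     (\<forall>f\<in>H. \<forall>g\<in>H. \<forall>c. ip (\<lambda>s. c * f s) g = c * ip f g) \<and>
     (\<forall>f\<in>H. \<forall>g\<in>H. ip g f = cnj (ip f g)) \<and>
     (\<forall>f\<in>H. Re (ip f f) \<ge> 0) \<and>
     (\<forall>f\<in>H. ip f f = 0 \<longrightarrow> f = (\<lambda>s. 0)) \<and>
     (\<forall>X::nat \<Rightarrow> complex \<Rightarrow> complex. (\<forall>k. X k \<in> H) \<longrightarrow>
        (\<forall>e>0. \<exists>N. \<forall>k\<ge>N. \<forall>l\<ge>N. hnorm ip (\<lambda>s. X k s - X l s) < e) \<longrightarrow>
        (\<exists>f\<in>H. (\<lambda>k. hnorm ip (\<lambda>s. X k s - f s)) \<longlonglongrightarrow> 0))"

definition is_rkhs :: "real \<Rightarrow> (complex \<Rightarrow> complex \<Rightarrow> complex) \<Rightarrow> (complex \<Rightarrow> complex) set \<Rightarrow>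
    ((complex \<Rightarrow> complex) \<Rightarrow> (complex \<Rightarrow> complex) \<Rightarrow> complex) \<Rightarrow> bool" where
  "is_rkhs \<rho> K H ip \<longleftrightarrow> hilbert_function_space \<rho> H ip \<and>
     (\<forall>t\<in>halfplane \<rho>. restr \<rho> (\<lambda>s. K s t) \<in> H \<and>
        (\<forall>f\<in>H. ip f (restr \<rho> (\<lambda>s. K s t)) = f t))"

text \<open>A family (B n)_{n>=1} in H is total: its closed linear span is H, i.e. every
  element of H is a norm limit of finite linear combinations.\<close>
definition total_family :: "(complex \<Rightarrow> complex) set \<Rightarrow>
    ((complex \<Rightarrow> complex) \<Rightarrow> (complex \<Rightarrow> complex) \<Rightarrow> complex) \<Rightarrow> (nat \<Rightarrow> complex \<Rightarrow> complex) \<Rightarrow> bool" where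
  "total_family H ip B \<longleftrightarrow> (\<forall>n\<ge>1. B n \<in> H) \<and>
     (\<forall>f\<in>H. \<forall>e>0. \<exists>N (c::nat \<Rightarrow> complex).
        hnorm ip (\<lambda>s. f s - (\<Sum>n\<in>{1..N}. c n * B n s)) < e)"

end

theory Submission
  imports Defs
begin


lemma dpow_real: "dpow m (of_real t) = of_real (real m powr (-t))"
  unfolding dpow_def by (metis of_real_minus of_real_of_nat_eq powr_of_real of_nat_0_le_iff)

lemma cnj_dpow: "cnj (dpow m s) = dpow m (cnj s)"
  unfolding dpow_def by (subst cnj_powr) auto

lemma norm_dpow: "norm (dpow m s) = real m powr (- Re s)"
  unfolding dpow_def by (subst norm_powr_real_powr) auto

lemma dpow_add: "dpow m (s + u) = dpow m s * dpow m u"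
  unfolding dpow_def minus_add_distrib by (rule powr_add)

lemma powr_tendsto_zero:
  fixes q :: real assumes "0 < q" "q < 1"
  shows "((\<lambda>t. q powr t) \<longlongrightarrow> 0) at_top"
proof -
  have "ln q < 0" using assms by simp
  have "LIM t at_top. ln q * t :> at_bot"
    by (rule filterlim_tendsto_neg_mult_at_bot[OF tendsto_const \<open>ln q < 0\<close> filterlim_ident])
  hence "((\<lambda>t. exp (ln q * t)) \<longlongrightarrow> 0) at_top"
    by (rule filterlim_compose[OF exp_at_bot])
  thus ?thesis using assms by (simp add: powr_def mult.commute)
qed

lemma key_est:
  fixes n m r t :: real
  assumes "1 \<le> n" "n \<le> m" "r + 2 \<le> t"
  shows "n powr t * (m powr r * m powr (-t)) \<le> n powr (r+2) * m powr (-2)"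
proof -
  define e where "e = t - r - 2"
  have e: "e \<ge> 0" using assms by (simp add: e_def)
  have m0: "m > 0" using assms by simp
  have "n powr t = n powr (r+2) * n powr e" by (simp add: e_def flip: powr_add)
  moreover have "m powr r * m powr (-t) = m powr (-2) * m powr (-e)"
    by (simp add: e_def flip: powr_add)
  moreover have "n powr e * m powr (-e) \<le> 1"
  proof -
    have "n powr e \<le> m powr e" using assms e by (intro powr_mono2) auto
    thus ?thesis using m0 by (simp add: powr_minus divide_simps)
  qed
  ultimately have "n powr t * (m powr r * m powr (-t)) = (n powr (r+2) * m powr (-2)) * (n powr e * m powr (-e))"
    by (simp add: algebra_simps)
  also have "\<dots> \<le> (n powr (r+2) * m powr (-2)) * 1"
    by (rule mult_left_mono) (use \<open>n powr e * m powr (-e) \<le> 1\<close> in auto)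
  finally show ?thesis by simp
qed

lemma summable_Suc_powr_m2: "summable (\<lambda>k. real (Suc k) powr (-2))"
proof -
  have "summable (\<lambda>k. real k powr (-2))" by (subst summable_real_powr_iff) auto
  thus ?thesis by (subst summable_Suc_iff)
qed

lemma conv_coeff_bound:
  fixes d :: "nat \<Rightarrow> complex"
  assumes "summable (\<lambda>m. d (Suc m) * dpow (Suc m) (of_real s1))"
  shows "\<exists>B. \<forall>m\<ge>1. norm (d m) \<le> B * real m powr s1"
proof -
  have "(\<lambda>m. d (Suc m) * dpow (Suc m) (of_real s1)) \<longlonglongrightarrow> 0"
    using assms by (rule summable_LIMSEQ_zero)
  hence "Bseq (\<lambda>m. d (Suc m) * dpow (Suc m) (of_real s1))"
    by (intro convergent_imp_Bseq) (auto simp: convergent_def)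
  then obtain B where B: "\<And>k. norm (d (Suc k) * dpow (Suc k) (of_real s1)) \<le> B"
    by (auto simp: Bseq_def)
  show ?thesis
  proof (intro exI allI impI)
    fix m :: nat assume "m \<ge> 1"
    then obtain k where k: "m = Suc k" by (cases m) auto
    have "norm (d m) * real m powr (-s1) \<le> B"
      using B[of k] by (simp add: k norm_mult norm_dpow)
    hence "norm (d m) * real m powr (-s1) * real m powr s1 \<le> B * real m powr s1"
      by (rule mult_right_mono) simp
    moreover have "real m powr (-s1) * real m powr s1 = 1"
      using k by (simp flip: powr_add)
    ultimately show "norm (d m) \<le> B * real m powr s1" by (simp add: mult.assoc)
  qed
qed

lemma pointwise_est:
  fixes d :: "nat \<Rightarrow> complex"
  assumes B: "\<And>m. m \<ge> 1 \<Longrightarrow> norm (d m) \<le> B * real m powr r" and n: "n \<ge> 1"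
    and z: "\<And>m. m < n \<Longrightarrow> d m = 0" and t: "t \<ge> r + 2"
  shows "norm (of_real (real n powr t) * (d (Suc k) * dpow (Suc k) (of_real t)))
           \<le> B * real n powr (r+2) * real (Suc k) powr (-2)"
proof -
  have B0: "B \<ge> 0" using B[of 1] by simp (metis norm_ge_zero order.trans)
  show ?thesis
  proof (cases "Suc k < n")
    case True thus ?thesis using z[of "Suc k"] B0 by simp
  next
    case False
    have "norm (of_real (real n powr t) * (d (Suc k) * dpow (Suc k) (of_real t)))
        = real n powr t * (norm (d (Suc k)) * real (Suc k) powr (-t))"
      by (simp add: norm_mult norm_dpow)
    also have "\<dots> \<le> real n powr t * (B * real (Suc k) powr r * real (Suc k) powr (-t))"
      by (intro mult_left_mono mult_right_mono B) auto
    also have "\<dots> = B * (real n powr t * (real (Suc k) powr r * real (Suc k) powr (-t)))"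
      by (simp add: algebra_simps)
    also have "\<dots> \<le> B * (real n powr (r+2) * real (Suc k) powr (-2))"
      using False n t by (intro mult_left_mono key_est B0) auto
    finally show ?thesis by (simp add: algebra_simps)
  qed
qed

lemma dir_bound:
  fixes d :: "nat \<Rightarrow> complex"
  assumes B: "\<And>m. m \<ge> 1 \<Longrightarrow> norm (d m) \<le> B * real m powr r" and n: "n \<ge> 1"
    and z: "\<And>m. m < n \<Longrightarrow> d m = 0" and t: "t \<ge> r + 2"
  shows "summable (\<lambda>m. d (Suc m) * dpow (Suc m) (of_real t))"
    "norm (of_real (real n powr t) * (\<Sum>m. d (Suc m) * dpow (Suc m) (of_real t)))
       \<le> B * real n powr (r+2) * (\<Sum>k. real (Suc k) powr (-2))"
proof -
  let ?M = "\<lambda>k. B * real n powr (r+2) * real (Suc k) powr (-2)"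
  have sM: "summable ?M" by (intro summable_mult summable_Suc_powr_m2)
  have est: "\<And>k. norm (of_real (real n powr t) * (d (Suc k) * dpow (Suc k) (of_real t))) \<le> ?M k"
    by (rule pointwise_est[OF B n z t])
  have s1: "summable (\<lambda>k. of_real (real n powr t) * (d (Suc k) * dpow (Suc k) (of_real t)))"
    by (rule summable_comparison_test[OF _ sM]) (use est in auto)
  thus "summable (\<lambda>m. d (Suc m) * dpow (Suc m) (of_real t))"
    using n by simp
  have "norm (of_real (real n powr t) * (\<Sum>m. d (Suc m) * dpow (Suc m) (of_real t)))
      = norm (\<Sum>k. of_real (real n powr t) * (d (Suc k) * dpow (Suc k) (of_real t)))"
    by (subst suminf_mult) (use s1 n in auto)
  also have "\<dots> \<le> (\<Sum>k. ?M k)" by (rule norm_suminf_le[OF est sM])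
  also have "\<dots> = B * real n powr (r+2) * (\<Sum>k. real (Suc k) powr (-2))"
    by (rule suminf_mult) (rule summable_Suc_powr_m2)
  finally show "norm (of_real (real n powr t) * (\<Sum>m. d (Suc m) * dpow (Suc m) (of_real t)))
       \<le> B * real n powr (r+2) * (\<Sum>k. real (Suc k) powr (-2))" .
qed

lemma dir_limit:
  fixes d :: "nat \<Rightarrow> complex"
  assumes B: "\<And>m. m \<ge> 1 \<Longrightarrow> norm (d m) \<le> B * real m powr r" and n: "n \<ge> 1"
    and z: "\<And>m. m < n \<Longrightarrow> d m = 0"
  shows "((\<lambda>t. of_real (real n powr t) * (\<Sum>m. d (Suc m) * dpow (Suc m) (of_real t))) \<longlongrightarrow> d n) at_top"
proof -
  define a where "a = (\<lambda>k t. of_real (real n powr t) * (d (Suc k) * dpow (Suc k) (of_real t)))"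
  define b where "b = (\<lambda>k. if k = n - 1 then d (Suc k) else 0)"
  let ?M = "\<lambda>k. B * real n powr (r+2) * real (Suc k) powr (-2)"
  have lim: "((\<lambda>t. a k t) \<longlongrightarrow> b k) at_top" for k
  proof (cases "Suc k < n")
    case True
    have "k \<noteq> n - 1" using True by arith
    thus ?thesis using True z[of "Suc k"] by (simp add: a_def b_def)
  next
    case False
    show ?thesis
    proof (cases "Suc k = n")
      case True
      have e1: "real n powr t * real n powr (-t) = 1" for t
        using n by (simp flip: powr_add)
      have "a k t = d (Suc k)" for t
      proof -
        have ne: "n = Suc k" using True by simp
        have "a k t = d n * of_real (real n powr t * real n powr (-t))"
          unfolding a_def ne by (simp only: dpow_real of_real_mult mult_ac)
        thus ?thesis using e1 True by simp
      qed
      moreover have "b k = d n" using True by (auto simp: b_def)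
      ultimately show ?thesis using True by simp
    next
      case F2: False
      hence gt: "real n < real (Suc k)" using False by linarith
      have "a k t = d (Suc k) * of_real ((real n / real (Suc k)) powr t)" for t
        using n by (simp add: a_def dpow_real powr_divide powr_minus divide_simps)
      moreover have "((\<lambda>t. d (Suc k) * of_real ((real n / real (Suc k)) powr t)) \<longlongrightarrow> d (Suc k) * of_real 0) at_top"
        using gt n by (intro tendsto_intros powr_tendsto_zero) auto
      moreover have "b k = 0" using F2 n by (auto simp: b_def)
      ultimately show ?thesis by simp
    qed
  qed
  have bound: "eventually (\<lambda>(k,t). norm (a k t) \<le> ?M k) (at_top \<times>\<^sub>F at_top)"
    unfolding eventually_prod_filter
    by (rule exI[of _ "\<lambda>_. True"], rule exI[of _ "\<lambda>t. t \<ge> r + 2"])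
       (auto simp: a_def simp del: of_nat_Suc intro!: pointwise_est[OF B n z] eventually_ge_at_top)
  have sM: "summable ?M" by (intro summable_mult summable_Suc_powr_m2)
  have T: "((\<lambda>t. \<Sum>k. a k t) \<longlongrightarrow> suminf b) at_top"
    using tannerys_theorem[OF lim bound sM] by simp
  have "b sums d (Suc (n - 1))" unfolding b_def by (rule sums_single)
  hence sb: "suminf b = d n" using n by (simp add: sums_iff)
  have ev: "eventually (\<lambda>t. (\<Sum>k. a k t) = of_real (real n powr t) * (\<Sum>m. d (Suc m) * dpow (Suc m) (of_real t))) at_top"
    using eventually_ge_at_top[of "r+2"]
  proof eventually_elim
    case (elim t)
    have "summable (\<lambda>m. d (Suc m) * dpow (Suc m) (of_real t))"
      by (rule dir_bound(1)[OF B n z elim])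
    thus ?case unfolding a_def by (rule suminf_mult)
  qed
  show ?thesis using T sb ev by (simp add: tendsto_cong)
qed

lemma dir_unique:
  fixes b b' :: "nat \<Rightarrow> complex" and S :: "real \<Rightarrow> complex"
  assumes "\<And>t. t \<ge> s1 \<Longrightarrow> (\<lambda>m. b (Suc m) * dpow (Suc m) (of_real t)) sums S t"
      "\<And>t. t \<ge> s1 \<Longrightarrow> (\<lambda>m. b' (Suc m) * dpow (Suc m) (of_real t)) sums S t"
  shows "m \<ge> 1 \<Longrightarrow> b m = b' m"
proof -
  define d where "d = (\<lambda>m. if m = 0 then 0 else b m - b' m)"
  have s0: "(\<lambda>m. d (Suc m) * dpow (Suc m) (of_real t)) sums 0" if "t \<ge> s1" for t
    using sums_diff[OF assms(1)[OF that] assms(2)[OF that]] by (simp add: d_def algebra_simps)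
  obtain B where B: "\<forall>m\<ge>1. norm (d m) \<le> B * real m powr s1"
    using conv_coeff_bound[of d s1] s0[of s1] by (auto simp: sums_iff)
  have dz: "d n = 0" for n
  proof (induction n rule: less_induct)
    case (less n)
    show ?case
    proof (cases "n = 0")
      case True thus ?thesis by (simp add: d_def)
    next
      case False
      have L: "((\<lambda>t. of_real (real n powr t) * (\<Sum>m. d (Suc m) * dpow (Suc m) (of_real t))) \<longlongrightarrow> d n) at_top"
        by (rule dir_limit[of d B s1 n]) (use B False less in auto)
      have "eventually (\<lambda>t. of_real (real n powr t) * (\<Sum>m. d (Suc m) * dpow (Suc m) (of_real t)) = 0) at_top"
        using eventually_ge_at_top[of s1] by eventually_elim (use s0 in \<open>auto simp: sums_iff\<close>)
      hence "((\<lambda>t. of_real (real n powr t) * (\<Sum>m. d (Suc m) * dpow (Suc m) (of_real t))) \<longlongrightarrow> 0) at_top"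
        by (simp add: tendsto_eventually)
      from tendsto_unique[OF _ L this] show ?thesis by simp
    qed
  qed
  show "m \<ge> 1 \<Longrightarrow> b m = b' m" using dz[of m] by (simp add: d_def)
qed

lemma iter_limit1:
  fixes F :: "nat \<times> nat \<Rightarrow> 'a::metric_space"
  assumes FL: "(F \<longlongrightarrow> L) (sequentially \<times>\<^sub>F sequentially)"
    and G: "\<And>N. ((\<lambda>M. F (M,N)) \<longlongrightarrow> G N) sequentially"
  shows "G \<longlonglongrightarrow> L"
proof (rule tendstoI)
  fix e :: real assume e: "e > 0"
  from tendstoD[OF FL, of "e/2"] e obtain N0 where N0: "\<And>M N. M \<ge> N0 \<Longrightarrow> N \<ge> N0 \<Longrightarrow> dist (F (M,N)) L < e/2"
    by (auto simp: eventually_prod_sequentially)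
  show "eventually (\<lambda>N. dist (G N) L < e) sequentially"
    using eventually_ge_at_top[of N0]
  proof eventually_elim
    case (elim N)
    have "dist (G N) L \<le> e/2"
    proof (rule tendsto_le[OF _ tendsto_const tendsto_dist[OF G tendsto_const]])
      show "eventually (\<lambda>M. dist (F (M, N)) L \<le> e/2) sequentially"
        using eventually_ge_at_top[of N0] by eventually_elim (use N0 elim in force)
    qed simp
    thus ?case using e by simp
  qed
qed

lemma iter_limit2:
  fixes F :: "nat \<times> nat \<Rightarrow> 'a::metric_space"
  assumes FL: "(F \<longlongrightarrow> L) (sequentially \<times>\<^sub>F sequentially)"
    and G: "\<And>M. ((\<lambda>N. F (M,N)) \<longlongrightarrow> G M) sequentially"
  shows "G \<longlonglongrightarrow> L"
proof (rule tendstoI)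
  fix e :: real assume e: "e > 0"
  from tendstoD[OF FL, of "e/2"] e obtain N0 where N0: "\<And>M N. M \<ge> N0 \<Longrightarrow> N \<ge> N0 \<Longrightarrow> dist (F (M,N)) L < e/2"
    by (auto simp: eventually_prod_sequentially)
  show "eventually (\<lambda>N. dist (G N) L < e) sequentially"
    using eventually_ge_at_top[of N0]
  proof eventually_elim
    case (elim M)
    have "dist (G M) L \<le> e/2"
    proof (rule tendsto_le[OF _ tendsto_const tendsto_dist[OF G tendsto_const]])
      show "eventually (\<lambda>N. dist (F (M, N)) L \<le> e/2) sequentially"
        using eventually_ge_at_top[of N0] by eventually_elim (use N0 elim in force)
    qed simp
    thus ?case using e by simp
  qed
qed

lemma sum_1_to: "(\<Sum>m\<in>{1..M}. f m) = (\<Sum>m<M. f (Suc m))"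
  by (simp add: sum.atLeast1_atMost_eq)

lemma double_sum_lim:
  assumes "double_converges c s u"
  shows "(dpsum c s u \<longlongrightarrow> double_sum c s u) (sequentially \<times>\<^sub>F sequentially)"
proof -
  from assms obtain L where L: "(dpsum c s u \<longlongrightarrow> L) (sequentially \<times>\<^sub>F sequentially)"
    by (auto simp: double_converges_def)
  have "double_sum c s u = L" unfolding double_sum_def
    by (rule tendsto_Lim[OF _ L]) (simp add: prod_filter_eq_bot)
  thus ?thesis using L by simp
qed

lemma part_i:
  assumes rc: "regularly_convergent c s u"
  shows "(\<lambda>n. (\<Sum>m. c (Suc m) (Suc n) * dpow (Suc m) s) * dpow (Suc n) u) sums double_sum c s u"
proof -
  have rows: "summable (\<lambda>m. c (Suc m) (Suc n) * dpow (Suc m) s)" for n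
    using rc by (auto simp: regularly_convergent_def)
  have FL: "(dpsum c s u \<longlongrightarrow> double_sum c s u) (sequentially \<times>\<^sub>F sequentially)"
    using rc by (intro double_sum_lim) (auto simp: regularly_convergent_def)
  have eq: "dpsum c s u (M,N) = (\<Sum>n<N. (\<Sum>m<M. c (Suc m) (Suc n) * dpow (Suc m) s) * dpow (Suc n) u)" for M N
    unfolding dpsum_def sum_1_to by (simp add: sum_distrib_right sum.swap[of _ "{..<M}"])
  show ?thesis unfolding sums_def
  proof (rule iter_limit1[OF FL])
    fix N
    show "((\<lambda>M. dpsum c s u (M, N)) \<longlongrightarrow> (\<Sum>n<N. (\<Sum>m. c (Suc m) (Suc n) * dpow (Suc m) s) * dpow (Suc n) u)) sequentially"
      unfolding eq by (intro tendsto_intros summable_LIMSEQ rows)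
  qed
qed

lemma part_i':
  assumes rc: "regularly_convergent c s u"
  shows "(\<lambda>m. (\<Sum>n. c (Suc m) (Suc n) * dpow (Suc n) u) * dpow (Suc m) s) sums double_sum c s u"
proof -
  have cols: "summable (\<lambda>n. c (Suc m) (Suc n) * dpow (Suc n) u)" for m
    using rc by (auto simp: regularly_convergent_def)
  have FL: "(dpsum c s u \<longlongrightarrow> double_sum c s u) (sequentially \<times>\<^sub>F sequentially)"
    using rc by (intro double_sum_lim) (auto simp: regularly_convergent_def)
  have eq: "dpsum c s u (M,N) = (\<Sum>m<M. (\<Sum>n<N. c (Suc m) (Suc n) * dpow (Suc n) u) * dpow (Suc m) s)" for M N
    unfolding dpsum_def sum_1_to by (simp add: sum_distrib_right sum_distrib_left algebra_simps)
  show ?thesis unfolding sums_def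
  proof (rule iter_limit2[OF FL])
    fix M
    show "((\<lambda>N. dpsum c s u (M, N)) \<longlongrightarrow> (\<Sum>m<M. (\<Sum>n. c (Suc m) (Suc n) * dpow (Suc n) u) * dpow (Suc m) s)) sequentially"
      unfolding eq by (intro tendsto_intros summable_LIMSEQ cols)
  qed
qed

lemma summable_bounded_terms:
  fixes f :: "nat \<Rightarrow> complex"
  assumes "summable f" shows "\<exists>b. \<forall>k. norm (f k) \<le> b"
proof -
  have "f \<longlonglongrightarrow> 0" using assms by (rule summable_LIMSEQ_zero)
  hence "Bseq f" by (intro convergent_imp_Bseq) (auto simp: convergent_def)
  thus ?thesis by (auto simp: Bseq_def)
qed

lemma dpsum_Suc1: "dpsum c s u (Suc M, N) = dpsum c s u (M, N) + (\<Sum>n\<in>{1..N}. c (Suc M) n * dpow (Suc M) s * dpow n u)"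
  unfolding dpsum_def by (simp add: sum_1_to)

lemma dpsum_Suc2: "dpsum c s u (M, Suc N) = dpsum c s u (M, N) + (\<Sum>m\<in>{1..M}. c m (Suc N) * dpow m s * dpow (Suc N) u)"
  unfolding dpsum_def by (simp add: sum_1_to sum.distrib)

lemma dpsum_term: "c (Suc M) (Suc N) * dpow (Suc M) s * dpow (Suc N) u =
   dpsum c s u (Suc M, Suc N) - dpsum c s u (M, Suc N) - dpsum c s u (Suc M, N) + dpsum c s u (M, N)"
  unfolding dpsum_Suc1 dpsum_Suc2 by (simp add: sum_1_to)

lemma double_terms_bounded:
  assumes rc: "regularly_convergent c s u"
  shows "\<exists>B. \<forall>m n. norm (c m n * dpow m s * dpow n u) \<le> B"
proof -
  let ?t = "\<lambda>m n. c m n * dpow m s * dpow n u"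
  have FL: "(dpsum c s u \<longlongrightarrow> double_sum c s u) (sequentially \<times>\<^sub>F sequentially)"
    using rc by (intro double_sum_lim) (auto simp: regularly_convergent_def)
  from tendstoD[OF FL, of 1] obtain N0 where N0: "\<And>M N. M \<ge> N0 \<Longrightarrow> N \<ge> N0 \<Longrightarrow> dist (dpsum c s u (M,N)) (double_sum c s u) < 1"
    by (auto simp: eventually_prod_sequentially)
  have z0: "dpow 0 s' = 0" for s' by (simp add: dpow_def)
  have "\<forall>m. \<exists>b. \<forall>n. norm (?t m n) \<le> b"
  proof
    fix m show "\<exists>b. \<forall>n. norm (?t m n) \<le> b"
    proof (cases m)
      case 0 thus ?thesis by (intro exI[of _ 0]) (simp add: z0)
    next
      case (Suc m')
      have "summable (\<lambda>n. c m (Suc n) * dpow (Suc n) u)" using rc Suc by (auto simp: regularly_convergent_def)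
      then obtain b where b: "\<And>k. norm (c m (Suc k) * dpow (Suc k) u) \<le> b" using summable_bounded_terms by blast
      show ?thesis
      proof (intro exI allI)
        fix n show "norm (?t m n) \<le> norm (dpow m s) * b"
        proof (cases n)
          case 0 thus ?thesis using b[of 0] by (simp add: z0) (metis norm_ge_zero order.trans mult_nonneg_nonneg)
        next
          case (Suc k) thus ?thesis using mult_left_mono[OF b[of k], of "norm (dpow m s)"] by (simp add: norm_mult algebra_simps)
        qed
      qed
    qed
  qed
  then obtain bf where bf: "\<And>m n. norm (?t m n) \<le> bf m" by metis
  have "\<forall>n. \<exists>b. \<forall>m. norm (?t m n) \<le> b"
  proof
    fix n show "\<exists>b. \<forall>m. norm (?t m n) \<le> b"
    proof (cases n)
      case 0 thus ?thesis by (intro exI[of _ 0]) (simp add: z0)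
    next
      case (Suc n')
      have "summable (\<lambda>m. c (Suc m) n * dpow (Suc m) s)" using rc Suc by (auto simp: regularly_convergent_def)
      then obtain b where b: "\<And>k. norm (c (Suc k) n * dpow (Suc k) s) \<le> b" using summable_bounded_terms by blast
      show ?thesis
      proof (intro exI allI)
        fix m show "norm (?t m n) \<le> b * norm (dpow n u)"
        proof (cases m)
          case 0 thus ?thesis using b[of 0] by (simp add: z0) (metis norm_ge_zero order.trans mult_nonneg_nonneg)
        next
          case (Suc k) thus ?thesis using b[of k] by (simp add: norm_mult mult_right_mono)
        qed
      qed
    qed
  qed
  then obtain bg where bg: "\<And>m n. norm (?t m n) \<le> bg n" by metis
  define B where "B = 4 + (\<Sum>i\<le>N0. \<bar>bf i\<bar>) + (\<Sum>i\<le>N0. \<bar>bg i\<bar>)"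
  have S1: "(\<Sum>i\<le>N0. \<bar>bf i\<bar>) \<ge> 0" "(\<Sum>i\<le>N0. \<bar>bg i\<bar>) \<ge> 0" by (auto intro: sum_nonneg)
  show ?thesis
  proof (intro exI allI)
    fix m n
    show "norm (?t m n) \<le> B"
    proof (cases "m \<le> N0")
      case True
      have "bf m \<le> \<bar>bf m\<bar>" by simp
      also have "\<bar>bf m\<bar> \<le> (\<Sum>i\<le>N0. \<bar>bf i\<bar>)"
        by (rule member_le_sum) (use True in auto)
      finally show ?thesis using bf[of m n] S1 unfolding B_def by linarith
    next
      case F1: False
      show ?thesis
      proof (cases "n \<le> N0")
        case True
        have "bg n \<le> \<bar>bg n\<bar>" by simp
        also have "\<bar>bg n\<bar> \<le> (\<Sum>i\<le>N0. \<bar>bg i\<bar>)"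
          by (rule member_le_sum) (use True in auto)
        finally show ?thesis using bg[of m n] S1 unfolding B_def by linarith
      next
        case F2: False
        obtain M where M: "m = Suc M" "M \<ge> N0" using F1 by (cases m) auto
        obtain N where N: "n = Suc N" "N \<ge> N0" using F2 by (cases n) auto
        let ?L = "double_sum c s u"
        have "?t m n = (dpsum c s u (Suc M, Suc N) - ?L) - (dpsum c s u (M, Suc N) - ?L)
                 - (dpsum c s u (Suc M, N) - ?L) + (dpsum c s u (M, N) - ?L)"
          unfolding M N dpsum_term by simp
        also have "norm \<dots> \<le> 4"
        proof -
          have "norm (dpsum c s u (Suc M, Suc N) - ?L) < 1" "norm (dpsum c s u (M, Suc N) - ?L) < 1"
               "norm (dpsum c s u (Suc M, N) - ?L) < 1" "norm (dpsum c s u (M, N) - ?L) < 1"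
            using N0[of "Suc M" "Suc N"] N0[of M "Suc N"] N0[of "Suc M" N] N0[of M N] M N
            by (auto simp: dist_norm)
          thus ?thesis by (smt (verit) norm_diff_ineq norm_triangle_ineq norm_triangle_ineq4)
        qed
        finally show ?thesis using S1 unfolding B_def by linarith
      qed
    qed
  qed
qed




locale hfs =
  fixes \<rho> :: real and H :: "(complex \<Rightarrow> complex) set"
    and ip :: "(complex \<Rightarrow> complex) \<Rightarrow> (complex \<Rightarrow> complex) \<Rightarrow> complex"
  assumes hfs: "hilbert_function_space \<rho> H ip"
begin

lemma vanish: "f \<in> H \<Longrightarrow> s \<notin> halfplane \<rho> \<Longrightarrow> f s = 0"
  and zero_in: "(\<lambda>s. 0) \<in> H"
  and add_in: "f \<in> H \<Longrightarrow> g \<in> H \<Longrightarrow> (\<lambda>s. f s + g s) \<in> H"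
  and scale_in: "f \<in> H \<Longrightarrow> (\<lambda>s. c * f s) \<in> H"
  and ip_add: "f \<in> H \<Longrightarrow> g \<in> H \<Longrightarrow> h \<in> H \<Longrightarrow> ip (\<lambda>s. f s + g s) h = ip f h + ip g h"
  and ip_scale: "f \<in> H \<Longrightarrow> g \<in> H \<Longrightarrow> ip (\<lambda>s. c * f s) g = c * ip f g"
  and ip_cnj: "f \<in> H \<Longrightarrow> g \<in> H \<Longrightarrow> ip g f = cnj (ip f g)"
  and ip_pos: "f \<in> H \<Longrightarrow> Re (ip f f) \<ge> 0"
  and ip_definite: "f \<in> H \<Longrightarrow> ip f f = 0 \<Longrightarrow> f = (\<lambda>s. 0)"
  and complete: "(\<And>k. X k \<in> H) \<Longrightarrow> (\<forall>e>0. \<exists>N. \<forall>k\<ge>N. \<forall>l\<ge>N. hnorm ip (\<lambda>s. X k s - X l s) < e) \<Longrightarrow>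
        (\<exists>f\<in>H. (\<lambda>k. hnorm ip (\<lambda>s. X k s - f s)) \<longlonglongrightarrow> 0)"
  using hfs unfolding hilbert_function_space_def by (blast, blast, blast, blast, blast, blast, blast, blast, blast, blast)

lemma diff_in: "f \<in> H \<Longrightarrow> g \<in> H \<Longrightarrow> (\<lambda>s. f s - g s) \<in> H"
  using add_in[OF _ scale_in[of g "-1"], of f] by simp

lemma ip_diff: "f \<in> H \<Longrightarrow> g \<in> H \<Longrightarrow> h \<in> H \<Longrightarrow> ip (\<lambda>s. f s - g s) h = ip f h - ip g h"
  using ip_add[OF _ scale_in[of g "-1"], of f h] ip_scale[of g h "-1"] by simp

lemma ip_add_r: assumes f: "f \<in> H" and g: "g \<in> H" and h: "h \<in> H"
  shows "ip h (\<lambda>s. f s + g s) = ip h f + ip h g"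
proof -
  have "ip h (\<lambda>s. f s + g s) = cnj (ip (\<lambda>s. f s + g s) h)" using ip_cnj[OF add_in[OF f g] h] .
  also have "\<dots> = cnj (ip f h) + cnj (ip g h)" using f g h by (simp add: ip_add)
  also have "cnj (ip f h) = ip h f" using ip_cnj[OF h f] by simp
  also have "cnj (ip g h) = ip h g" using ip_cnj[OF h g] by simp
  finally show ?thesis .
qed

lemma ip_scale_r: assumes f: "f \<in> H" and g: "g \<in> H"
  shows "ip f (\<lambda>s. c * g s) = cnj c * ip f g"
proof -
  have "ip f (\<lambda>s. c * g s) = cnj (ip (\<lambda>s. c * g s) f)" using ip_cnj[OF scale_in[OF g] f] .
  also have "\<dots> = cnj c * cnj (ip g f)" using f g by (simp add: ip_scale)
  also have "cnj (ip g f) = ip f g" using ip_cnj[OF f g] by simp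
  finally show ?thesis .
qed

lemma ip_diff_r: assumes f: "f \<in> H" and g: "g \<in> H" and h: "h \<in> H"
  shows "ip h (\<lambda>s. f s - g s) = ip h f - ip h g"
proof -
  have "ip h (\<lambda>s. f s - g s) = cnj (ip (\<lambda>s. f s - g s) h)" using ip_cnj[OF diff_in[OF f g] h] .
  also have "\<dots> = cnj (ip f h) - cnj (ip g h)" using f g h by (simp add: ip_diff)
  also have "cnj (ip f h) = ip h f" using ip_cnj[OF h f] by simp
  also have "cnj (ip g h) = ip h g" using ip_cnj[OF h g] by simp
  finally show ?thesis .
qed

lemma ip_zero: "h \<in> H \<Longrightarrow> ip (\<lambda>s. 0) h = 0"
  using ip_scale[OF zero_in, of h 0] by simp

lemma ip_zero_r: "h \<in> H \<Longrightarrow> ip h (\<lambda>s. 0) = 0"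
  using ip_cnj[OF zero_in, of h] ip_zero[of h] by simp

lemma sum_in: "finite I \<Longrightarrow> (\<And>i. i \<in> I \<Longrightarrow> g i \<in> H) \<Longrightarrow> (\<lambda>s. \<Sum>i\<in>I. c i * g i s) \<in> H"
proof (induction I rule: finite_induct)
  case empty thus ?case using zero_in by simp
next
  case (insert x F)
  thus ?case using add_in[OF scale_in[of "g x" "c x"], of "\<lambda>s. \<Sum>i\<in>F. c i * g i s"] by simp
qed

lemma ip_sum_l: "finite I \<Longrightarrow> (\<And>i. i \<in> I \<Longrightarrow> g i \<in> H) \<Longrightarrow> h \<in> H \<Longrightarrow>
    ip (\<lambda>s. \<Sum>i\<in>I. c i * g i s) h = (\<Sum>i\<in>I. c i * ip (g i) h)"
proof (induction I rule: finite_induct)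
  case empty thus ?case using ip_zero by simp
next
  case (insert x F)
  have "ip (\<lambda>s. \<Sum>i\<in>insert x F. c i * g i s) h = ip (\<lambda>s. c x * g x s + (\<Sum>i\<in>F. c i * g i s)) h"
    using insert by simp
  also have "\<dots> = c x * ip (g x) h + ip (\<lambda>s. \<Sum>i\<in>F. c i * g i s) h"
    using insert by (subst ip_add) (auto intro: scale_in sum_in simp: ip_scale)
  finally show ?case using insert by simp
qed

lemma ip_sum_r: "finite I \<Longrightarrow> (\<And>i. i \<in> I \<Longrightarrow> g i \<in> H) \<Longrightarrow> h \<in> H \<Longrightarrow>
    ip h (\<lambda>s. \<Sum>i\<in>I. c i * g i s) = (\<Sum>i\<in>I. cnj (c i) * ip h (g i))"
proof -
  assume a: "finite I" "\<And>i. i \<in> I \<Longrightarrow> g i \<in> H" "h \<in> H"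
  have "ip h (\<lambda>s. \<Sum>i\<in>I. c i * g i s) = cnj (ip (\<lambda>s. \<Sum>i\<in>I. c i * g i s) h)"
    using a by (intro ip_cnj sum_in) auto
  also have "\<dots> = (\<Sum>i\<in>I. cnj (c i) * cnj (ip (g i) h))" using a by (simp add: ip_sum_l)
  also have "\<dots> = (\<Sum>i\<in>I. cnj (c i) * ip h (g i))" using a by (intro sum.cong) (auto simp: ip_cnj[of h])
  finally show ?thesis .
qed

lemma ip_self_real: "f \<in> H \<Longrightarrow> ip f f = of_real (Re (ip f f))"
  using ip_cnj[of f f] by (simp add: complex_eq_iff)

lemma hnorm_nonneg: "f \<in> H \<Longrightarrow> hnorm ip f \<ge> 0" using ip_pos by (simp add: hnorm_def)

lemma hnorm_sq: assumes "f \<in> H" shows "hnorm ip f ^ 2 = Re (ip f f)"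
  using ip_pos[OF assms] by (simp add: hnorm_def)

lemma ip_expand: "f \<in> H \<Longrightarrow> g \<in> H \<Longrightarrow>
   ip (\<lambda>s. f s - t * g s) (\<lambda>s. f s - t * g s) = ip f f - cnj t * ip f g - t * ip g f + t * cnj t * ip g g"
proof -
  assume f: "f \<in> H" and g: "g \<in> H"
  have tg: "(\<lambda>s. t * g s) \<in> H" using g by (rule scale_in)
  have fd: "(\<lambda>s. f s - t * g s) \<in> H" using f tg by (rule diff_in)
  have "ip (\<lambda>s. f s - t * g s) (\<lambda>s. f s - t * g s) = ip f (\<lambda>s. f s - t * g s) - t * ip g (\<lambda>s. f s - t * g s)"
    using f tg fd by (simp add: ip_diff ip_scale g)
  also have "\<dots> = ip f f - cnj t * ip f g - t * (ip g f - cnj t * ip g g)"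
    using f g tg by (simp add: ip_diff_r ip_scale_r)
  finally show ?thesis by (simp add: algebra_simps)
qed

lemma cauchy_schwarz: assumes f: "f \<in> H" and g: "g \<in> H"
  shows "norm (ip f g) \<le> hnorm ip f * hnorm ip g"
proof (cases "Re (ip g g) = 0")
  case True
  hence "ip g g = 0" using ip_self_real[OF g] by simp
  hence "g = (\<lambda>s. 0)" using g by (rule ip_definite[rotated])
  thus ?thesis using f ip_pos[OF f] ip_pos[OF zero_in] by (simp add: ip_zero_r hnorm_def)
next
  case False
  define q where "q = Re (ip g g)"
  define p where "p = ip f g"
  have q: "q > 0" using False ip_pos[OF g] by (simp add: q_def)
  define t where "t = p / of_real q"
  have "0 \<le> Re (ip (\<lambda>s. f s - t * g s) (\<lambda>s. f s - t * g s))"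
    using f g by (intro ip_pos diff_in scale_in)
  also have "ip (\<lambda>s. f s - t * g s) (\<lambda>s. f s - t * g s) = ip f f - cnj t * p - t * cnj p + t * cnj t * of_real q"
  proof -
    have e1: "ip g f = cnj p" unfolding p_def by (rule ip_cnj[OF f g])
    have e2: "ip g g = of_real q" unfolding q_def by (rule ip_self_real[OF g])
    show ?thesis unfolding ip_expand[OF f g] e1 e2 p_def ..
  qed
  also have "\<dots> = ip f f - of_real (norm p ^ 2 / q)"
    using q by (simp add: t_def field_simps complex_norm_square[symmetric] mult.commute[of "cnj p"])
  finally have "norm p ^ 2 / q \<le> Re (ip f f)" by simp
  hence "norm p ^ 2 \<le> Re (ip f f) * q" using q by (simp add: field_simps)
  also have "\<dots> = (hnorm ip f * hnorm ip g) ^ 2"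
    using f g by (simp add: power_mult_distrib hnorm_sq q_def)
  finally have "norm p \<le> hnorm ip f * hnorm ip g"
    by (rule power2_le_imp_le) (simp add: hnorm_nonneg f g)
  thus ?thesis by (simp add: p_def)
qed

lemma ip_lim_l:
  assumes X: "\<And>k. X k \<in> H" and g: "g \<in> H" and h: "h \<in> H"
    and lim: "(\<lambda>k. hnorm ip (\<lambda>s. X k s - g s)) \<longlonglongrightarrow> 0"
  shows "(\<lambda>k. ip (X k) h) \<longlonglongrightarrow> ip g h"
proof (rule LIM_zero_cancel, rule Lim_null_comparison)
  show "eventually (\<lambda>k. norm (ip (X k) h - ip g h) \<le> hnorm ip (\<lambda>s. X k s - g s) * hnorm ip h) sequentially"
  proof (intro always_eventually allI)
    fix k
    have "ip (X k) h - ip g h = ip (\<lambda>s. X k s - g s) h" using ip_diff[OF X g h] by simp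
    thus "norm (ip (X k) h - ip g h) \<le> hnorm ip (\<lambda>s. X k s - g s) * hnorm ip h"
      using cauchy_schwarz[OF diff_in[OF X g] h] by simp
  qed
  show "(\<lambda>k. hnorm ip (\<lambda>s. X k s - g s) * hnorm ip h) \<longlonglongrightarrow> 0"
    using tendsto_mult[OF lim tendsto_const] by simp
qed

lemma ip_lim_r:
  assumes X: "\<And>k. X k \<in> H" and g: "g \<in> H" and h: "h \<in> H"
    and lim: "(\<lambda>k. hnorm ip (\<lambda>s. X k s - g s)) \<longlonglongrightarrow> 0"
  shows "(\<lambda>k. ip h (X k)) \<longlonglongrightarrow> ip h g"
proof -
  have "(\<lambda>k. cnj (ip (X k) h)) \<longlonglongrightarrow> cnj (ip g h)"
    by (intro tendsto_cnj ip_lim_l[OF X g h lim])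
  thus ?thesis using X g h by (simp add: ip_cnj[of _ h])
qed

lemma cauchy_limit:
  assumes X: "\<And>k. X k \<in> H"
    and C: "((\<lambda>(i,j). Re (ip (\<lambda>s. X i s - X j s) (\<lambda>s. X i s - X j s))) \<longlongrightarrow> 0) (sequentially \<times>\<^sub>F sequentially)"
  shows "\<exists>g\<in>H. (\<lambda>k. hnorm ip (\<lambda>s. X k s - g s)) \<longlonglongrightarrow> 0"
proof (rule complete[OF X], intro allI impI)
  fix e :: real assume e: "e > 0"
  from tendstoD[OF C, of "e^2"] e obtain N where
    N: "\<And>i j. i \<ge> N \<Longrightarrow> j \<ge> N \<Longrightarrow> dist (Re (ip (\<lambda>s. X i s - X j s) (\<lambda>s. X i s - X j s))) 0 < e^2"
    by (auto simp: eventually_prod_sequentially)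
  show "\<exists>N. \<forall>k\<ge>N. \<forall>l\<ge>N. hnorm ip (\<lambda>s. X k s - X l s) < e"
  proof (intro exI allI impI)
    fix k l assume "k \<ge> N" "l \<ge> N"
    hence "Re (ip (\<lambda>s. X k s - X l s) (\<lambda>s. X k s - X l s)) < e^2" using N by (auto simp: dist_real_def abs_less_iff)
    hence "sqrt (Re (ip (\<lambda>s. X k s - X l s) (\<lambda>s. X k s - X l s))) < sqrt (e^2)" by (rule real_sqrt_less_mono)
    thus "hnorm ip (\<lambda>s. X k s - X l s) < e" using e by (simp add: hnorm_def)
  qed
qed

end




lemma G1:
  fixes f :: "nat \<Rightarrow> complex"
  assumes "(\<lambda>k. f (Suc k)) sums S" "n \<ge> 1"
  shows "(\<lambda>k. if Suc k < n then 0 else f (Suc k)) sums (S - (\<Sum>l\<in>{1..<n}. f l))"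
proof -
  have fin: "(\<lambda>k. if Suc k < n then f (Suc k) else 0) sums (\<Sum>k\<in>{..<n-1}. if Suc k < n then f (Suc k) else 0)"
    by (rule sums_finite) auto
  have "(\<Sum>k\<in>{..<n-1}. if Suc k < n then f (Suc k) else 0) = (\<Sum>k<n-1. f (Suc k))"
    by (intro sum.cong) auto
  also have "\<dots> = (\<Sum>l\<in>{1..<n}. f l)"
  proof -
    obtain n' where n': "n = Suc n'" using assms(2) by (cases n) auto
    show ?thesis unfolding n' by (simp add: atLeastLessThanSuc_atLeastAtMost sum.atLeast1_atMost_eq)
  qed
  finally have fin': "(\<lambda>k. if Suc k < n then f (Suc k) else 0) sums (\<Sum>l\<in>{1..<n}. f l)" using fin by simp
  show ?thesis using sums_diff[OF assms(1) fin'] by (simp add: if_distrib cong: if_cong)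
qed

lemma hp_cnj: "cnj u \<in> halfplane \<rho> \<longleftrightarrow> u \<in> halfplane \<rho>"
  by (simp add: halfplane_def)

lemma hp_real: "complex_of_real t \<in> halfplane \<rho> \<longleftrightarrow> t > \<rho>"
  by (simp add: halfplane_def)

locale dks = hfs +
  fixes a :: "nat \<Rightarrow> nat \<Rightarrow> complex"
  assumes kernel: "dirichlet_series_kernel \<rho> a"
    and rk: "\<forall>t\<in>halfplane \<rho>. restr \<rho> (\<lambda>s. dkernel a s t) \<in> H \<and>
        (\<forall>f\<in>H. ip f (restr \<rho> (\<lambda>s. dkernel a s t)) = f t)"
begin

abbreviation "D \<equiv> halfplane \<rho>"
definition "K t = restr \<rho> (\<lambda>s. dkernel a s t)"
definition "As n = restr \<rho> (analytic_symbol a n)"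
abbreviation "A \<equiv> analytic_symbol a"

lemma rc: "s \<in> D \<Longrightarrow> u \<in> D \<Longrightarrow> regularly_convergent a s u"
  using kernel by (simp add: dirichlet_series_kernel_def)

lemma K_in: "t \<in> D \<Longrightarrow> K t \<in> H" using rk by (simp add: K_def)
lemma repro: "f \<in> H \<Longrightarrow> t \<in> D \<Longrightarrow> ip f (K t) = f t" using rk by (simp add: K_def)
lemma K_eval: "s \<in> D \<Longrightarrow> K t s = dkernel a s t" by (simp add: K_def restr_def)
lemma As_eval: "s \<in> D \<Longrightarrow> As n s = A n s" by (simp add: As_def restr_def)

lemma part1: "s \<in> D \<Longrightarrow> u \<in> D \<Longrightarrow> (\<lambda>n. A (Suc n) s * dpow (Suc n) (cnj u)) sums dkernel a s u"
  unfolding dkernel_def analytic_symbol_def by (rule part_i, rule rc) (auto simp: hp_cnj)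

lemma part1': "s \<in> D \<Longrightarrow> u \<in> D \<Longrightarrow>
   (\<lambda>m. (\<Sum>n. a (Suc m) (Suc n) * dpow (Suc n) (cnj u)) * dpow (Suc m) s) sums dkernel a s u"
  unfolding dkernel_def by (rule part_i', rule rc) (auto simp: hp_cnj)

lemma A_sums: "s \<in> D \<Longrightarrow> n \<ge> 1 \<Longrightarrow> (\<lambda>m. a (Suc m) n * dpow (Suc m) s) sums A n s"
proof -
  assume s: "s \<in> D" and n: "n \<ge> 1"
  have "regularly_convergent a s s" using s by (rule rc[OF s])
  hence "summable (\<lambda>m. a (Suc m) n * dpow (Suc m) s)" using n by (simp add: regularly_convergent_def)
  thus ?thesis by (simp add: analytic_symbol_def summable_sums)
qed

lemma col_sums: "u \<in> D \<Longrightarrow> m \<ge> 1 \<Longrightarrow> (\<lambda>n. a m (Suc n) * dpow (Suc n) u) sums (\<Sum>n. a m (Suc n) * dpow (Suc n) u)"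
proof -
  assume u: "u \<in> D" and m: "m \<ge> 1"
  have "regularly_convergent a u u" by (rule rc[OF u u])
  hence "summable (\<lambda>n. a m (Suc n) * dpow (Suc n) u)" using m by (simp add: regularly_convergent_def)
  thus ?thesis by (simp add: summable_sums)
qed

lemma herm: "s \<in> D \<Longrightarrow> t \<in> D \<Longrightarrow> dkernel a s t = cnj (dkernel a t s)"
proof -
  assume s: "s \<in> D" and t: "t \<in> D"
  have "dkernel a s t = K t s" using s by (simp add: K_eval)
  also have "\<dots> = ip (K t) (K s)" using repro[OF K_in[OF t] s] by simp
  also have "\<dots> = cnj (ip (K s) (K t))" using ip_cnj[OF K_in[OF s] K_in[OF t]] .
  also have "ip (K s) (K t) = dkernel a t s" using repro[OF K_in[OF s] t] t by (simp add: K_eval)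
  finally show ?thesis .
qed

lemma real_cnj: "cnj (complex_of_real t) = complex_of_real t" by (simp add: complex_eq_iff)

lemma coeff_sym: assumes m: "m \<ge> 1" and k: "k \<ge> 1" shows "a m k = cnj (a k m)"
proof -
  have step1: "(\<Sum>n. a m (Suc n) * dpow (Suc n) (of_real u)) = cnj (A m (of_real u))"
    if u: "u > \<rho>" and m: "m \<ge> 1" for u m
  proof -
    have uD: "of_real u \<in> D" using u by (simp add: hp_real)
    show ?thesis
    proof (rule dir_unique[where ?s1.0 = "\<rho> + 1" and S = "\<lambda>t. dkernel a (of_real t) (of_real u)"
            and b = "\<lambda>m. (\<Sum>n. a m (Suc n) * dpow (Suc n) (of_real u))"
            and b' = "\<lambda>m. cnj (A m (of_real u))"])
      fix t :: real assume t: "t \<ge> \<rho> + 1"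
      hence tD: "of_real t \<in> D" by (simp add: hp_real)
      show "(\<lambda>m. (\<Sum>n. a (Suc m) (Suc n) * dpow (Suc n) (of_real u)) * dpow (Suc m) (of_real t)) sums dkernel a (of_real t) (of_real u)"
        using part1'[OF tD uD] by (simp add: real_cnj)
      have "(\<lambda>n. A (Suc n) (of_real u) * dpow (Suc n) (of_real t)) sums dkernel a (of_real u) (of_real t)"
        using part1[OF uD tD] by (simp add: real_cnj)
      hence "(\<lambda>n. cnj (A (Suc n) (of_real u) * dpow (Suc n) (of_real t))) sums cnj (dkernel a (of_real u) (of_real t))"
        by (subst sums_cnj)
      thus "(\<lambda>m. cnj (A (Suc m) (of_real u)) * dpow (Suc m) (of_real t)) sums dkernel a (of_real t) (of_real u)"
        using herm[OF tD uD] by (simp add: cnj_dpow real_cnj)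
    qed (use m in auto)
  qed
  show ?thesis
  proof (rule dir_unique[where ?s1.0 = "\<rho> + 1" and S = "\<lambda>t. (\<Sum>n. a m (Suc n) * dpow (Suc n) (of_real t))"
            and b = "\<lambda>k. a m k" and b' = "\<lambda>k. cnj (a k m)"])
    fix t :: real assume t: "t \<ge> \<rho> + 1"
    hence tD: "of_real t \<in> D" by (simp add: hp_real)
    show "(\<lambda>n. a m (Suc n) * dpow (Suc n) (of_real t)) sums (\<Sum>n. a m (Suc n) * dpow (Suc n) (of_real t))"
      by (rule col_sums[OF tD m])
    have "(\<lambda>n. cnj (a (Suc n) m * dpow (Suc n) (of_real t))) sums cnj (A m (of_real t))"
      by (subst sums_cnj) (rule A_sums[OF tD m])
    thus "(\<lambda>n. cnj (a (Suc n) m) * dpow (Suc n) (of_real t)) sums (\<Sum>n. a m (Suc n) * dpow (Suc n) (of_real t))"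
      using step1[of t m] t m by (simp add: cnj_dpow real_cnj)
  qed (use k in auto)
qed

definition "r0 = \<rho> + 1"

lemma r0D: "complex_of_real r0 \<in> D" unfolding r0_def by (simp add: halfplane_def)

lemma coeff_bound: "\<exists>B. \<forall>m\<ge>1. \<forall>k\<ge>1. norm (a m k) \<le> B * real m powr r0 * real k powr r0"
proof -
  obtain B where B: "\<And>m k. norm (a m k * dpow m (of_real r0) * dpow k (of_real r0)) \<le> B"
    using double_terms_bounded[OF rc[OF r0D r0D]] by blast
  show ?thesis
  proof (intro exI allI impI)
    fix m k :: nat assume m: "m \<ge> 1" and k: "k \<ge> 1"
    have "norm (a m k) * (real m powr (-r0) * real k powr (-r0)) \<le> B"
      using B[of m k] by (simp add: norm_mult norm_dpow mult.assoc)
    hence "norm (a m k) * (real m powr (-r0) * real k powr (-r0)) * (real m powr r0 * real k powr r0)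
           \<le> B * (real m powr r0 * real k powr r0)"
      by (rule mult_right_mono) simp
    moreover have "real m powr (-r0) * real k powr (-r0) * (real m powr r0 * real k powr r0) = 1"
      using m k by (simp add: algebra_simps flip: powr_add)
    ultimately show "norm (a m k) \<le> B * real m powr r0 * real k powr r0"
      by (simp add: mult.assoc)
  qed
qed

definition "tt j = r0 + 2 + real j"

lemma tt_ge: "tt j \<ge> r0 + 2" by (simp add: tt_def)
lemma tt_D: "complex_of_real (tt j) \<in> D" unfolding hp_real by (simp add: tt_def r0_def)
lemma tt_gt: "tt j > \<rho>" by (simp add: tt_def r0_def)
lemma tt_lim: "filterlim tt at_top sequentially"
  unfolding tt_def by (intro filterlim_tendsto_add_at_top[OF tendsto_const] filterlim_real_sequentially)

definition "X n j = (\<lambda>z. of_real (real n powr tt j) *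
    (K (of_real (tt j)) z - (\<Sum>l\<in>{1..<n}. dpow l (of_real (tt j)) * As l z)))"

definition "dA z n k = (if k < n then 0 else A k z)"
definition "dC q n m = (if m < n then 0 else a m q)"

lemma X_in: "(\<And>l. 1 \<le> l \<Longrightarrow> l < n \<Longrightarrow> As l \<in> H) \<Longrightarrow> X n j \<in> H"
  unfolding X_def by (intro scale_in diff_in K_in tt_D sum_in) auto

lemma X_eval_sums:
  assumes z: "z \<in> D" and n: "n \<ge> 1" and t: "t > \<rho>"
  shows "(\<lambda>k. dA z n (Suc k) * dpow (Suc k) (of_real t)) sums
           (K (of_real t) z - (\<Sum>l\<in>{1..<n}. dpow l (of_real t) * As l z))"
proof -
  have tD: "complex_of_real t \<in> D" using t by (simp add: hp_real)
  have "(\<lambda>k. A (Suc k) z * dpow (Suc k) (of_real t)) sums dkernel a z (of_real t)"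
    using part1[OF z tD] by (simp add: real_cnj)
  from G1[OF this n] have "(\<lambda>k. if Suc k < n then 0 else A (Suc k) z * dpow (Suc k) (of_real t)) sums
      (dkernel a z (of_real t) - (\<Sum>l\<in>{1..<n}. A l z * dpow l (of_real t)))" by simp
  moreover have "(\<lambda>k. dA z n (Suc k) * dpow (Suc k) (of_real t)) = (\<lambda>k. if Suc k < n then 0 else A (Suc k) z * dpow (Suc k) (of_real t))"
    by (auto simp: dA_def)
  moreover have "(\<Sum>l\<in>{1..<n}. dpow l (of_real t) * As l z) = (\<Sum>l\<in>{1..<n}. A l z * dpow l (of_real t))"
    using z by (intro sum.cong) (auto simp: As_eval)
  ultimately show ?thesis using z by (simp add: K_eval)
qed

lemma X_eval:
  assumes z: "z \<in> D" and n: "n \<ge> 1"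
  shows "X n j z = of_real (real n powr tt j) * (\<Sum>k. dA z n (Suc k) * dpow (Suc k) (of_real (tt j)))"
  using sums_unique[OF X_eval_sums[OF z n tt_gt[of j]]] by (simp add: X_def)

lemma X_ptwise:
  assumes z: "z \<in> D" and n: "n \<ge> 1"
  shows "(\<lambda>j. X n j z) \<longlonglongrightarrow> A n z"
proof -
  have "r0 > \<rho>" by (simp add: r0_def)
  from X_eval_sums[OF z n this] have "summable (\<lambda>k. dA z n (Suc k) * dpow (Suc k) (of_real r0))"
    by (simp add: sums_iff)
  then obtain B where B: "\<forall>m\<ge>1. norm (dA z n m) \<le> B * real m powr r0"
    using conv_coeff_bound by blast
  have L: "((\<lambda>t. of_real (real n powr t) * (\<Sum>m. dA z n (Suc m) * dpow (Suc m) (of_real t))) \<longlongrightarrow> dA z n n) at_top"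
    by (rule dir_limit[OF _ n]) (use B in \<open>auto simp: dA_def\<close>)
  have "(\<lambda>j. of_real (real n powr tt j) * (\<Sum>m. dA z n (Suc m) * dpow (Suc m) (of_real (tt j)))) \<longlonglongrightarrow> dA z n n"
    by (rule filterlim_compose[OF L tt_lim])
  thus ?thesis using X_eval[OF z n] by (simp add: dA_def)
qed

lemma ip_AX:
  assumes n: "n \<ge> 1" and Al: "\<And>l. 1 \<le> l \<Longrightarrow> l < n \<Longrightarrow> As l \<in> H" and q: "q \<ge> 1" and Aq: "As q \<in> H"
    and ipq: "\<And>l. 1 \<le> l \<Longrightarrow> l < n \<Longrightarrow> ip (As q) (As l) = a l q"
  shows "(\<lambda>m. dC q n (Suc m) * dpow (Suc m) (of_real (tt j))) sums (ip (As q) (X n j) / of_real (real n powr tt j))"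
proof -
  let ?t = "complex_of_real (tt j)"
  have tD: "?t \<in> D" by (rule tt_D)
  have SH: "(\<lambda>z. \<Sum>l\<in>{1..<n}. dpow l ?t * As l z) \<in> H" by (intro sum_in Al) auto
  have "ip (As q) (X n j) = cnj (of_real (real n powr tt j)) *
          ip (As q) (\<lambda>z. K ?t z - (\<Sum>l\<in>{1..<n}. dpow l ?t * As l z))"
    unfolding X_def by (intro ip_scale_r Aq diff_in K_in tD SH)
  also have "ip (As q) (\<lambda>z. K ?t z - (\<Sum>l\<in>{1..<n}. dpow l ?t * As l z))
      = ip (As q) (K ?t) - ip (As q) (\<lambda>z. \<Sum>l\<in>{1..<n}. dpow l ?t * As l z)"
    by (intro ip_diff_r K_in tD SH Aq)
  also have "ip (As q) (K ?t) = A q ?t" using repro[OF Aq tD] tD by (simp add: As_eval)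
  also have "ip (As q) (\<lambda>z. \<Sum>l\<in>{1..<n}. dpow l ?t * As l z) = (\<Sum>l\<in>{1..<n}. cnj (dpow l ?t) * ip (As q) (As l))"
    by (intro ip_sum_r Al Aq) auto
  also have "\<dots> = (\<Sum>l\<in>{1..<n}. a l q * dpow l ?t)"
    by (intro sum.cong) (auto simp: ipq cnj_dpow real_cnj)
  finally have eq: "ip (As q) (X n j) = of_real (real n powr tt j) * (A q ?t - (\<Sum>l\<in>{1..<n}. a l q * dpow l ?t))"
    by (simp add: real_cnj)
  have "(\<lambda>k. if Suc k < n then 0 else a (Suc k) q * dpow (Suc k) ?t) sums (A q ?t - (\<Sum>l\<in>{1..<n}. a l q * dpow l ?t))"
    by (rule G1[OF A_sums[OF tD q] n])
  moreover have "(\<lambda>m. dC q n (Suc m) * dpow (Suc m) ?t) = (\<lambda>k. if Suc k < n then 0 else a (Suc k) q * dpow (Suc k) ?t)"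
    by (auto simp: dC_def)
  moreover have "complex_of_real (real n powr tt j) \<noteq> 0" using n by simp
  ultimately show ?thesis using eq by simp
qed

lemma ip_AX_eq:
  assumes n: "n \<ge> 1" and Al: "\<And>l. 1 \<le> l \<Longrightarrow> l < n \<Longrightarrow> As l \<in> H" and q: "q \<ge> 1" and Aq: "As q \<in> H"
    and ipq: "\<And>l. 1 \<le> l \<Longrightarrow> l < n \<Longrightarrow> ip (As q) (As l) = a l q"
  shows "ip (As q) (X n j) = of_real (real n powr tt j) * (\<Sum>m. dC q n (Suc m) * dpow (Suc m) (of_real (tt j)))"
proof -
  have "complex_of_real (real n powr tt j) \<noteq> 0" using n by simp
  thus ?thesis using sums_unique[OF ip_AX[OF assms, of j]] by (simp add: field_simps)
qed

lemma dC_bound: "q \<ge> 1 \<Longrightarrow> \<exists>B. \<forall>m\<ge>1. norm (dC q n m) \<le> B * real m powr r0"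
proof -
  assume q: "q \<ge> 1"
  obtain B where B: "\<forall>m\<ge>1. \<forall>k\<ge>1. norm (a m k) \<le> B * real m powr r0 * real k powr r0"
    using coeff_bound by blast
  have B0: "B \<ge> 0" using B[rule_format, of 1 1] by simp (metis norm_ge_zero order.trans)
  show ?thesis
  proof (intro exI allI impI)
    fix m :: nat assume m: "m \<ge> 1"
    show "norm (dC q n m) \<le> (B * real q powr r0) * real m powr r0"
      using B[rule_format, OF m q] B0 by (auto simp: dC_def algebra_simps)
  qed
qed

lemma ip_AX_lim:
  assumes n: "n \<ge> 1" and Al: "\<And>l. 1 \<le> l \<Longrightarrow> l < n \<Longrightarrow> As l \<in> H" and q: "q \<ge> 1" and Aq: "As q \<in> H"
    and ipq: "\<And>l. 1 \<le> l \<Longrightarrow> l < n \<Longrightarrow> ip (As q) (As l) = a l q"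
  shows "(\<lambda>j. ip (As q) (X n j)) \<longlonglongrightarrow> a n q"
proof -
  obtain B where B: "\<forall>m\<ge>1. norm (dC q n m) \<le> B * real m powr r0" using dC_bound[OF q] by blast
  have L: "((\<lambda>t. of_real (real n powr t) * (\<Sum>m. dC q n (Suc m) * dpow (Suc m) (of_real t))) \<longlongrightarrow> dC q n n) at_top"
    by (rule dir_limit[OF _ n]) (use B in \<open>auto simp: dC_def\<close>)
  have "(\<lambda>j. of_real (real n powr tt j) * (\<Sum>m. dC q n (Suc m) * dpow (Suc m) (of_real (tt j)))) \<longlonglongrightarrow> dC q n n"
    by (rule filterlim_compose[OF L tt_lim])
  thus ?thesis using ip_AX_eq[OF assms] by (simp add: dC_def)
qed


lemma dC_sums:
  assumes n: "n \<ge> 1" and q: "q \<ge> 1" and t: "t \<in> D"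
  shows "(\<lambda>m. dC q n (Suc m) * dpow (Suc m) t) sums (A q t - (\<Sum>l\<in>{1..<n}. a l q * dpow l t))"
proof -
  have "(\<lambda>k. if Suc k < n then 0 else a (Suc k) q * dpow (Suc k) t) sums (A q t - (\<Sum>l\<in>{1..<n}. a l q * dpow l t))"
    by (rule G1[OF A_sums[OF t q] n])
  moreover have "(\<lambda>m. dC q n (Suc m) * dpow (Suc m) t) = (\<lambda>k. if Suc k < n then 0 else a (Suc k) q * dpow (Suc k) t)"
    by (auto simp: dC_def)
  ultimately show ?thesis by simp
qed

definition "R n q j = of_real (real n powr tt j) * (\<Sum>m. dC q n (Suc m) * dpow (Suc m) (of_real (tt j)))"
definition "dR n q j = (if q < n then 0 else R n q j)"

lemma R_lim: assumes n: "n \<ge> 1" and q: "q \<ge> 1" shows "(\<lambda>j. R n q j) \<longlonglongrightarrow> a n q"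
proof -
  obtain B where B: "\<forall>m\<ge>1. norm (dC q n m) \<le> B * real m powr r0" using dC_bound[OF q] by blast
  have L: "((\<lambda>t. of_real (real n powr t) * (\<Sum>m. dC q n (Suc m) * dpow (Suc m) (of_real t))) \<longlongrightarrow> dC q n n) at_top"
    by (rule dir_limit[OF _ n]) (use B in \<open>auto simp: dC_def\<close>)
  have "(\<lambda>j. of_real (real n powr tt j) * (\<Sum>m. dC q n (Suc m) * dpow (Suc m) (of_real (tt j)))) \<longlonglongrightarrow> dC q n n"
    by (rule filterlim_compose[OF L tt_lim])
  thus ?thesis by (simp add: dC_def R_def)
qed

lemma R_bound: "\<exists>B'. \<forall>q\<ge>1. \<forall>j. norm (R n q j) \<le> B' * real q powr r0" if n: "n \<ge> 1"
proof -
  obtain B where B: "\<forall>m\<ge>1. \<forall>k\<ge>1. norm (a m k) \<le> B * real m powr r0 * real k powr r0"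
    using coeff_bound by blast
  have B0: "B \<ge> 0" using B[rule_format, of 1 1] by simp (metis norm_ge_zero order.trans)
  define Z where "Z = (\<Sum>k. real (Suc k) powr (-2))"
  show ?thesis
  proof (intro exI allI impI)
    fix q j :: nat assume q: "q \<ge> 1"
    have "norm (R n q j) \<le> (B * real q powr r0) * real n powr (r0+2) * Z"
      unfolding R_def Z_def
    proof (rule dir_bound(2)[OF _ n])
      fix m :: nat assume m: "m \<ge> 1"
      show "norm (dC q n m) \<le> (B * real q powr r0) * real m powr r0"
        using B[rule_format, OF m q] B0 by (auto simp: dC_def algebra_simps)
    qed (auto simp: dC_def tt_ge)
    thus "norm (R n q j) \<le> (B * real n powr (r0+2) * Z) * real q powr r0"
      by (simp add: algebra_simps)
  qed
qed

context
  fixes n :: nat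
  assumes n: "n \<ge> 1"
    and Al: "\<And>l. 1 \<le> l \<Longrightarrow> l < n \<Longrightarrow> As l \<in> H"
    and ipAA: "\<And>l l'. 1 \<le> l \<Longrightarrow> l < n \<Longrightarrow> 1 \<le> l' \<Longrightarrow> l' < n \<Longrightarrow> ip (As l) (As l') = a l' l"
begin

lemma ip_XX_sums:
  "(\<lambda>k. of_real (real n powr tt i) * (dR n (Suc k) j * dpow (Suc k) (of_real (tt i)))) sums ip (X n i) (X n j)"
proof -
  let ?ti = "complex_of_real (tt i)" and ?tj = "complex_of_real (tt j)"
  let ?ci = "complex_of_real (real n powr tt i)" and ?cj = "complex_of_real (real n powr tt j)"
  have Xi: "X n i \<in> H" by (rule X_in[OF Al])
  have SH: "(\<lambda>z. \<Sum>l\<in>{1..<n}. dpow l ?tj * As l z) \<in> H" by (intro sum_in Al) auto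
  define f1 where "f1 = (\<lambda>k. dA ?tj n (Suc k) * dpow (Suc k) ?ti)"
  define g where "g = (\<lambda>l k. cnj (dC l n (Suc k)) * dpow (Suc k) ?ti)"
  have f1s: "f1 sums suminf f1"
    using X_eval_sums[OF tt_D n tt_gt[of i]] unfolding f1_def by (simp add: sums_iff)
  have Xtj: "X n i ?tj = ?ci * suminf f1" unfolding f1_def by (rule X_eval[OF tt_D n])
  have gs: "g l sums cnj (ip (As l) (X n i) / ?ci)" if l: "1 \<le> l" "l < n" for l
  proof -
    have "(\<lambda>m. dC l n (Suc m) * dpow (Suc m) ?ti) sums (ip (As l) (X n i) / ?ci)"
      by (rule ip_AX[OF n Al l(1) Al[OF l]]) (use ipAA l in auto)
    hence "(\<lambda>m. cnj (dC l n (Suc m) * dpow (Suc m) ?ti)) sums cnj (ip (As l) (X n i) / ?ci)"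
      by (subst sums_cnj)
    thus ?thesis unfolding g_def by (simp add: cnj_dpow real_cnj)
  qed
  have "ip (X n i) (X n j) = cnj ?cj * ip (X n i) (\<lambda>z. K ?tj z - (\<Sum>l\<in>{1..<n}. dpow l ?tj * As l z))"
  proof -
    have Xj_eq: "X n j = (\<lambda>z. ?cj * (K ?tj z - (\<Sum>l\<in>{1..<n}. dpow l ?tj * As l z)))"
      unfolding X_def ..
    show ?thesis unfolding Xj_eq by (rule ip_scale_r[OF Xi]) (intro diff_in K_in tt_D SH)
  qed
  also have "ip (X n i) (\<lambda>z. K ?tj z - (\<Sum>l\<in>{1..<n}. dpow l ?tj * As l z))
      = ip (X n i) (K ?tj) - ip (X n i) (\<lambda>z. \<Sum>l\<in>{1..<n}. dpow l ?tj * As l z)"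
    by (intro ip_diff_r K_in tt_D SH Xi)
  also have "ip (X n i) (K ?tj) = ?ci * suminf f1" using repro[OF Xi tt_D] Xtj by simp
  also have "ip (X n i) (\<lambda>z. \<Sum>l\<in>{1..<n}. dpow l ?tj * As l z) = (\<Sum>l\<in>{1..<n}. cnj (dpow l ?tj) * ip (X n i) (As l))"
    by (intro ip_sum_r Al Xi) auto
  also have "\<dots> = (\<Sum>l\<in>{1..<n}. dpow l ?tj * (?ci * cnj (ip (As l) (X n i) / ?ci)))"
  proof (intro sum.cong refl)
    fix l assume "l \<in> {1..<n}"
    hence l: "1 \<le> l" "l < n" by auto
    have "ip (X n i) (As l) = cnj (ip (As l) (X n i))" by (rule ip_cnj[OF Al[OF l] Xi])
    moreover have "?ci \<noteq> 0" using n by simp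
    ultimately show "cnj (dpow l ?tj) * ip (X n i) (As l) = dpow l ?tj * (?ci * cnj (ip (As l) (X n i) / ?ci))"
      by (simp add: cnj_dpow real_cnj)
  qed
  finally have eq: "ip (X n i) (X n j) = ?cj * (?ci * suminf f1 - (\<Sum>l\<in>{1..<n}. dpow l ?tj * (?ci * cnj (ip (As l) (X n i) / ?ci))))"
    by (simp add: real_cnj)
  have S: "(\<lambda>k. ?cj * (?ci * f1 k - (\<Sum>l\<in>{1..<n}. dpow l ?tj * (?ci * g l k)))) sums ip (X n i) (X n j)"
    unfolding eq using gs
    by (intro sums_mult sums_diff f1s sums_sum) auto
  have termeq: "?cj * (?ci * f1 k - (\<Sum>l\<in>{1..<n}. dpow l ?tj * (?ci * g l k)))
      = ?ci * (dR n (Suc k) j * dpow (Suc k) ?ti)" for k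
  proof (cases "Suc k < n")
    case True thus ?thesis by (simp add: f1_def g_def dA_def dC_def dR_def)
  next
    case False
    have g': "g l k = a l (Suc k) * dpow (Suc k) ?ti" if "l \<in> {1..<n}" for l
      using False that coeff_sym[of l "Suc k"] by (auto simp: g_def dC_def)
    have "(\<Sum>m. dC (Suc k) n (Suc m) * dpow (Suc m) ?tj) = A (Suc k) ?tj - (\<Sum>l\<in>{1..<n}. a l (Suc k) * dpow l ?tj)"
      using sums_unique[OF dC_sums[OF n _ tt_D, of "Suc k" j]] by simp
    hence R: "dR n (Suc k) j = ?cj * (A (Suc k) ?tj - (\<Sum>l\<in>{1..<n}. a l (Suc k) * dpow l ?tj))"
      using False by (simp add: dR_def R_def)
    have "(\<Sum>l\<in>{1..<n}. dpow l ?tj * (?ci * g l k)) = ?ci * dpow (Suc k) ?ti * (\<Sum>l\<in>{1..<n}. a l (Suc k) * dpow l ?tj)"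
      by (simp add: sum_distrib_left g' algebra_simps)
    thus ?thesis using False unfolding R by (simp add: f1_def dA_def algebra_simps)
  qed
  show ?thesis using S unfolding termeq .
qed

lemma ip_XX_lim:
  "((\<lambda>p. ip (X n (fst p)) (X n (snd p))) \<longlongrightarrow> a n n) (sequentially \<times>\<^sub>F sequentially)"
proof -
  define T where "T = (\<lambda>k p. of_real (real n powr tt (fst p)) * (dR n (Suc k) (snd p) * dpow (Suc k) (of_real (tt (fst p)))))"
  define b where "b = (\<lambda>k. if k = n - 1 then a n (Suc k) else 0)"
  obtain B' where B': "\<forall>q\<ge>1. \<forall>j. norm (R n q j) \<le> B' * real q powr r0" using R_bound[OF n] by blast
  have lim: "((\<lambda>p. T k p) \<longlongrightarrow> b k) (sequentially \<times>\<^sub>F sequentially)" for k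
  proof (cases "Suc k < n")
    case True
    hence "k \<noteq> n - 1" by arith
    thus ?thesis using True by (simp add: T_def b_def dR_def)
  next
    case False
    have Rl: "((\<lambda>p. R n (Suc k) (snd p)) \<longlongrightarrow> a n (Suc k)) (sequentially \<times>\<^sub>F sequentially)"
      by (rule filterlim_compose[OF R_lim[OF n] filterlim_snd]) simp
    show ?thesis
    proof (cases "Suc k = n")
      case True
      have "T k p = R n (Suc k) (snd p)" for p
      proof -
        have "real n powr tt (fst p) * real n powr (- tt (fst p)) = 1" using n by (simp flip: powr_add)
        hence "of_real (real n powr tt (fst p)) * dpow (Suc k) (of_real (tt (fst p))) = (1::complex)"
          using True by (simp add: dpow_real flip: of_real_mult)
        thus ?thesis using True by (simp add: T_def dR_def algebra_simps)
      qed
      moreover have "b k = a n (Suc k)" using True by (simp add: b_def)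
      ultimately show ?thesis using Rl by simp
    next
      case F2: False
      hence gt: "real n < real (Suc k)" using False by linarith
      have "T k p = of_real ((real n / real (Suc k)) powr tt (fst p)) * R n (Suc k) (snd p)" for p
        using False n by (simp add: T_def dR_def dpow_real powr_divide powr_minus divide_simps)
      moreover have "((\<lambda>p. of_real ((real n / real (Suc k)) powr tt (fst p)) * R n (Suc k) (snd p)) \<longlongrightarrow> of_real 0 * a n (Suc k))
          (sequentially \<times>\<^sub>F sequentially)"
      proof (intro tendsto_mult Rl tendsto_of_real)
        have "((\<lambda>t. (real n / real (Suc k)) powr t) \<longlongrightarrow> 0) at_top"
          using gt n by (intro powr_tendsto_zero) auto
        thus "((\<lambda>p. (real n / real (Suc k)) powr tt (fst p)) \<longlongrightarrow> 0) (sequentially \<times>\<^sub>F sequentially)"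
          by (rule filterlim_compose[OF _ filterlim_compose[OF tt_lim filterlim_fst]])
      qed
      moreover have "b k = 0" using F2 n by (auto simp: b_def)
      ultimately show ?thesis by simp
    qed
  qed
  have B'0: "B' \<ge> 0" using B'[rule_format, of 1 0] by simp (metis norm_ge_zero order.trans)
  let ?M = "\<lambda>k. B' * real n powr (r0+2) * real (Suc k) powr (-2)"
  have bound: "eventually (\<lambda>(k,p). norm (T k p) \<le> ?M k) (at_top \<times>\<^sub>F (sequentially \<times>\<^sub>F sequentially))"
  proof (rule always_eventually, clarify)
    fix k i j
    show "norm (T k (i,j)) \<le> ?M k"
      unfolding T_def fst_conv snd_conv
    proof (rule pointwise_est[OF _ n _ tt_ge])
      fix m :: nat assume "m \<ge> 1"
      show "norm (dR n m j) \<le> B' * real m powr r0"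
        using B'[rule_format, OF \<open>m \<ge> 1\<close>, of j] B'0 by (simp add: dR_def)
    qed (simp add: dR_def)
  qed
  have sM: "summable ?M" by (intro summable_mult summable_Suc_powr_m2)
  have T: "((\<lambda>p. \<Sum>k. T k p) \<longlongrightarrow> suminf b) (sequentially \<times>\<^sub>F sequentially)"
    using tannerys_theorem[OF lim bound sM] by (simp add: prod_filter_eq_bot)
  have "b sums a n (Suc (n - 1))" unfolding b_def by (rule sums_single)
  hence sb: "suminf b = a n n" using n by (simp add: sums_iff)
  have "(\<Sum>k. T k p) = ip (X n (fst p)) (X n (snd p))" for p
    using sums_unique[OF ip_XX_sums[of "fst p" "snd p"]] by (simp add: T_def)
  thus ?thesis using T sb by simp
qed


lemma step: "As n \<in> H \<and> (\<forall>l. 1 \<le> l \<longrightarrow> l \<le> n \<longrightarrow> ip (As l) (As n) = a n l)"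
proof -
  have Xin: "X n j \<in> H" for j by (rule X_in[OF Al])
  let ?F = "sequentially \<times>\<^sub>F sequentially :: (nat \<times> nat) filter"
  let ?P = "\<lambda>q. ip (X n (fst q)) (X n (snd q))"
  have P: "(?P \<longlongrightarrow> a n n) ?F" by (rule ip_XX_lim)
  have d1: "((\<lambda>p. ?P (fst p, fst p)) \<longlongrightarrow> a n n) ?F"
    by (rule filterlim_compose[OF P filterlim_Pair[OF filterlim_fst filterlim_fst]])
  have d2: "((\<lambda>p. ?P (snd p, snd p)) \<longlongrightarrow> a n n) ?F"
    by (rule filterlim_compose[OF P filterlim_Pair[OF filterlim_snd filterlim_snd]])
  have d3: "((\<lambda>p. ?P (snd p, fst p)) \<longlongrightarrow> a n n) ?F"
    by (rule filterlim_compose[OF P filterlim_Pair[OF filterlim_snd filterlim_fst]])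
  have e: "ip (\<lambda>s. X n i s - X n j s) (\<lambda>s. X n i s - X n j s) =
      ip (X n i) (X n i) - ip (X n i) (X n j) - (ip (X n j) (X n i) - ip (X n j) (X n j))" for i j
    using Xin by (simp add: ip_diff diff_in ip_diff_r)
  have "((\<lambda>p. Re (?P (fst p, fst p) - ?P p - (?P (snd p, fst p) - ?P (snd p, snd p)))) \<longlongrightarrow>
          Re (a n n - a n n - (a n n - a n n))) ?F"
    by (intro tendsto_intros d1 d2 d3 P)
  hence C: "((\<lambda>(i,j). Re (ip (\<lambda>s. X n i s - X n j s) (\<lambda>s. X n i s - X n j s))) \<longlongrightarrow> 0) ?F"
    by (simp add: e case_prod_beta')
  obtain g where g: "g \<in> H" and lim: "(\<lambda>k. hnorm ip (\<lambda>s. X n k s - g s)) \<longlonglongrightarrow> 0"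
    using cauchy_limit[OF Xin C] by blast
  have gA: "g = As n"
  proof
    fix z show "g z = As n z"
    proof (cases "z \<in> D")
      case True
      have "(\<lambda>j. ip (X n j) (K z)) \<longlonglongrightarrow> ip g (K z)" by (rule ip_lim_l[OF Xin g K_in[OF True] lim])
      moreover have "(\<lambda>j. ip (X n j) (K z)) = (\<lambda>j. X n j z)" using repro[OF Xin True] by simp
      ultimately have "(\<lambda>j. X n j z) \<longlonglongrightarrow> ip g (K z)" by simp
      from tendsto_unique[OF _ this X_ptwise[OF True n]] have "ip g (K z) = A n z" by simp
      thus ?thesis using repro[OF g True] True by (simp add: As_eval)
    next
      case False thus ?thesis using vanish[OF g False] by (simp add: As_def restr_def)
    qed
  qed
  have AnH: "As n \<in> H" using g gA by simp
  have lt: "ip (As l) (As n) = a n l" if l: "1 \<le> l" "l < n" for l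
  proof -
    have "(\<lambda>j. ip (As l) (X n j)) \<longlonglongrightarrow> ip (As l) g" by (rule ip_lim_r[OF Xin g Al[OF l] lim])
    moreover have "(\<lambda>j. ip (As l) (X n j)) \<longlonglongrightarrow> a n l"
      by (rule ip_AX_lim[OF n Al l(1) Al[OF l]]) (use ipAA l in auto)
    ultimately show ?thesis using gA tendsto_unique by (metis trivial_limit_sequentially)
  qed
  have eqn: "ip (As n) (As n) = a n n"
  proof -
    have "(\<lambda>j. ip (As n) (X n j)) \<longlonglongrightarrow> ip (As n) g" by (rule ip_lim_r[OF Xin g AnH lim])
    moreover have "(\<lambda>j. ip (As n) (X n j)) \<longlonglongrightarrow> a n n"
    proof (rule ip_AX_lim[OF n Al n AnH])
      fix l assume l: "1 \<le> l" "l < n"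
      have "ip (As n) (As l) = cnj (ip (As l) (As n))" by (rule ip_cnj[OF Al[OF l] AnH])
      also have "\<dots> = a l n" using lt[OF l] coeff_sym[of l n] l n by simp
      finally show "ip (As n) (As l) = a l n" .
    qed
    ultimately show ?thesis using gA tendsto_unique by (metis trivial_limit_sequentially)
  qed
  show ?thesis using AnH lt eqn by (auto simp: le_less)
qed

end

lemma As_all: "n \<ge> 1 \<Longrightarrow> As n \<in> H \<and> (\<forall>l. 1 \<le> l \<longrightarrow> l \<le> n \<longrightarrow> ip (As l) (As n) = a n l)"
proof (induction n rule: less_induct)
  case (less n)
  have Al: "As l \<in> H" if "1 \<le> l" "l < n" for l using less.IH that by blast
  have ipAA: "ip (As l) (As l') = a l' l" if "1 \<le> l" "l < n" "1 \<le> l'" "l' < n" for l l'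
  proof (cases "l \<le> l'")
    case True thus ?thesis using less.IH[of l'] that by blast
  next
    case False
    have "ip (As l) (As l') = cnj (ip (As l') (As l))" by (rule ip_cnj[OF Al Al]) (use that in auto)
    also have "ip (As l') (As l) = a l l'" using less.IH[of l] that False by auto
    finally show ?thesis using coeff_sym[of l' l] that by simp
  qed
  show ?case by (rule step[OF less.prems Al ipAA])
qed

lemma As_in: "n \<ge> 1 \<Longrightarrow> As n \<in> H" using As_all by blast

lemma ip_As: assumes "l \<ge> 1" "n \<ge> 1" shows "ip (As l) (As n) = a n l"
proof (cases "l \<le> n")
  case True thus ?thesis using As_all[OF assms(2)] assms by blast
next
  case False
  have "ip (As l) (As n) = cnj (ip (As n) (As l))" by (rule ip_cnj[OF As_in As_in]) (use assms in auto)
  also have "ip (As n) (As l) = a l n" using As_all[OF assms(1)] assms False by auto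
  finally show ?thesis using coeff_sym[of n l] assms by simp
qed

end




context hfs begin

lemma neg_diff_hnorm: "x \<in> H \<Longrightarrow> y \<in> H \<Longrightarrow> hnorm ip (\<lambda>s. y s - x s) = hnorm ip (\<lambda>s. x s - y s)"
proof -
  assume x: "x \<in> H" and y: "y \<in> H"
  have d: "(\<lambda>s. x s - y s) \<in> H" using x y by (rule diff_in)
  have eq1: "(\<lambda>s. y s - x s) = (\<lambda>s. (-1) * (x s - y s))" by auto
  have "ip (\<lambda>s. (-1) * (x s - y s)) (\<lambda>s. (-1) * (x s - y s)) = (-1) * ip (\<lambda>s. x s - y s) (\<lambda>s. (-1) * (x s - y s))"
    by (rule ip_scale[OF d scale_in[OF d]])
  also have "ip (\<lambda>s. x s - y s) (\<lambda>s. (-1) * (x s - y s)) = cnj (-1) * ip (\<lambda>s. x s - y s) (\<lambda>s. x s - y s)"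
    by (rule ip_scale_r[OF d d])
  finally have eq2: "ip (\<lambda>s. (-1) * (x s - y s)) (\<lambda>s. (-1) * (x s - y s)) = ip (\<lambda>s. x s - y s) (\<lambda>s. x s - y s)"
    by simp
  show ?thesis unfolding hnorm_def eq1 eq2 ..
qed

lemma ip_self_lim:
  assumes Y: "\<And>k. Y k \<in> H" and Y0: "Y0 \<in> H" and lim: "(\<lambda>k. hnorm ip (\<lambda>s. Y k s - Y0 s)) \<longlonglongrightarrow> 0"
  shows "(\<lambda>k. ip (Y k) (Y k)) \<longlonglongrightarrow> ip Y0 Y0"
proof -
  have e: "ip (Y k) (Y k) = ip (\<lambda>s. Y k s - Y0 s) (\<lambda>s. Y k s - Y0 s) + ip Y0 (Y k) + ip (Y k) Y0 - ip Y0 Y0" for k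
    using Y[of k] Y0 by (simp add: ip_diff ip_diff_r diff_in)
  have n0: "(\<lambda>k. ip (\<lambda>s. Y k s - Y0 s) (\<lambda>s. Y k s - Y0 s)) \<longlonglongrightarrow> 0"
  proof (rule tendsto_norm_zero_cancel)
    have "norm (ip (\<lambda>s. Y k s - Y0 s) (\<lambda>s. Y k s - Y0 s)) = hnorm ip (\<lambda>s. Y k s - Y0 s) ^ 2" for k
    proof -
      have d: "(\<lambda>s. Y k s - Y0 s) \<in> H" using Y Y0 by (rule diff_in)
      define RR where "RR = Re (ip (\<lambda>s. Y k s - Y0 s) (\<lambda>s. Y k s - Y0 s))"
      have "ip (\<lambda>s. Y k s - Y0 s) (\<lambda>s. Y k s - Y0 s) = of_real RR"
        unfolding RR_def by (rule ip_self_real[OF d])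
      moreover have "RR \<ge> 0" unfolding RR_def by (rule ip_pos[OF d])
      ultimately show ?thesis using hnorm_sq[OF d] by (simp add: RR_def[symmetric])
    qed
    moreover have "(\<lambda>k. hnorm ip (\<lambda>s. Y k s - Y0 s) ^ 2) \<longlonglongrightarrow> 0" using tendsto_power[OF lim, of 2] by simp
    ultimately show "(\<lambda>k. norm (ip (\<lambda>s. Y k s - Y0 s) (\<lambda>s. Y k s - Y0 s))) \<longlonglongrightarrow> 0" by simp
  qed
  have "(\<lambda>k. ip (\<lambda>s. Y k s - Y0 s) (\<lambda>s. Y k s - Y0 s) + ip Y0 (Y k) + ip (Y k) Y0 - ip Y0 Y0) \<longlonglongrightarrow> 0 + ip Y0 Y0 + ip Y0 Y0 - ip Y0 Y0"
    by (intro tendsto_intros n0 ip_lim_r[OF Y Y0 Y0 lim] ip_lim_l[OF Y Y0 Y0 lim])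
  thus ?thesis unfolding e by simp
qed

lemma parallelogram: "u \<in> H \<Longrightarrow> v \<in> H \<Longrightarrow>
  ip (\<lambda>s. u s - v s) (\<lambda>s. u s - v s) + ip (\<lambda>s. u s + v s) (\<lambda>s. u s + v s) = 2 * ip u u + 2 * ip v v"
  by (simp add: ip_diff ip_diff_r ip_add ip_add_r diff_in add_in)

end

context dks begin

lemma part2:
  assumes f: "f \<in> H" and s: "s \<in> D"
  shows "(\<lambda>n. ip f (As (Suc n)) * dpow (Suc n) s) sums f s"
proof -
  define w where "w n = dpow n (cnj s)" for n
  define P where "P N = (\<lambda>z. \<Sum>n\<in>{1..N}. w n * As n z)" for N
  have PH: "P N \<in> H" for N unfolding P_def by (intro sum_in As_in) auto
  have KH: "K s \<in> H" by (rule K_in[OF s])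
  define \<kappa> where "\<kappa> = dkernel a s s"
  have ipPK: "ip (P N) (K s) = (\<Sum>n<N. A (Suc n) s * dpow (Suc n) (cnj s))" for N
  proof -
    have "ip (P N) (K s) = (\<Sum>n\<in>{1..N}. w n * ip (As n) (K s))"
      unfolding P_def by (intro ip_sum_l As_in KH) auto
    also have "\<dots> = (\<Sum>n\<in>{1..N}. A n s * dpow n (cnj s))"
      by (intro sum.cong) (auto simp: repro[OF As_in s] As_eval[OF s] w_def)
    finally show ?thesis by (simp add: sum.atLeast1_atMost_eq)
  qed
  have L1: "(\<lambda>N. ip (P N) (K s)) \<longlonglongrightarrow> \<kappa>"
    using part1[OF s s] unfolding ipPK \<kappa>_def sums_def .
  have L2: "(\<lambda>N. ip (K s) (P N)) \<longlonglongrightarrow> \<kappa>"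
  proof -
    have "(\<lambda>N. cnj (ip (P N) (K s))) \<longlonglongrightarrow> cnj \<kappa>" by (intro tendsto_cnj L1)
    moreover have "cnj \<kappa> = \<kappa>" using herm[OF s s] by (simp add: \<kappa>_def)
    ultimately show ?thesis using ip_cnj[OF PH KH] by simp
  qed
  have ipPP: "ip (P N) (P N) = dpsum a s (cnj s) (N, N)" for N
  proof -
    have "ip (P N) (P N) = (\<Sum>n\<in>{1..N}. w n * ip (As n) (P N))"
      unfolding P_def[of N] by (intro ip_sum_l As_in PH[unfolded P_def]) auto
    also have "\<dots> = (\<Sum>n\<in>{1..N}. w n * (\<Sum>k\<in>{1..N}. cnj (w k) * ip (As n) (As k)))"
      by (intro sum.cong refl) (auto simp: P_def intro!: ip_sum_r As_in)
    also have "\<dots> = (\<Sum>n\<in>{1..N}. \<Sum>k\<in>{1..N}. a k n * dpow k s * dpow n (cnj s))"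
      by (intro sum.cong refl) (auto simp: sum_distrib_left ip_As w_def cnj_dpow algebra_simps)
    also have "\<dots> = dpsum a s (cnj s) (N, N)"
      unfolding dpsum_def prod.case by (rule sum.swap)
    finally show ?thesis .
  qed
  have L3: "(\<lambda>N. ip (P N) (P N)) \<longlonglongrightarrow> \<kappa>"
  proof -
    have DS: "(dpsum a s (cnj s) \<longlongrightarrow> \<kappa>) (sequentially \<times>\<^sub>F sequentially)"
      unfolding \<kappa>_def dkernel_def
      by (rule double_sum_lim) (use rc[OF s] s in \<open>auto simp: regularly_convergent_def hp_cnj\<close>)
    have "(\<lambda>N. dpsum a s (cnj s) (N, N)) \<longlonglongrightarrow> \<kappa>"
      by (rule filterlim_compose[OF DS filterlim_Pair[OF filterlim_ident filterlim_ident]])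
    thus ?thesis unfolding ipPP .
  qed
  have KK: "ip (K s) (K s) = \<kappa>" using repro[OF KH s] s by (simp add: K_eval \<kappa>_def)
  have e: "ip (\<lambda>z. P N z - K s z) (\<lambda>z. P N z - K s z) = ip (P N) (P N) - ip (P N) (K s) - (ip (K s) (P N) - ip (K s) (K s))" for N
    using PH[of N] KH by (simp add: ip_diff ip_diff_r diff_in)
  have "(\<lambda>N. sqrt (Re (ip (P N) (P N) - ip (P N) (K s) - (ip (K s) (P N) - ip (K s) (K s))))) \<longlonglongrightarrow> sqrt (Re (\<kappa> - \<kappa> - (\<kappa> - \<kappa>)))"
    unfolding KK by (intro tendsto_intros L1 L2 L3)
  hence hn: "(\<lambda>N. hnorm ip (\<lambda>z. P N z - K s z)) \<longlonglongrightarrow> 0"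
    by (simp add: hnorm_def e)
  have "(\<lambda>N. ip f (P N)) \<longlonglongrightarrow> ip f (K s)" by (rule ip_lim_r[OF PH KH f hn])
  moreover have "ip f (P N) = (\<Sum>n<N. ip f (As (Suc n)) * dpow (Suc n) s)" for N
  proof -
    have "ip f (P N) = (\<Sum>n\<in>{1..N}. cnj (w n) * ip f (As n))"
      unfolding P_def by (intro ip_sum_r As_in f) auto
    thus ?thesis by (simp add: w_def cnj_dpow sum.atLeast1_atMost_eq mult.commute)
  qed
  ultimately show ?thesis using repro[OF f s] by (simp add: sums_def)
qed


lemma S_ext: "N1 \<le> N \<Longrightarrow> (\<Sum>n\<in>{1..N1}. c n * As n z) = (\<Sum>n\<in>{1..N}. (if n \<le> N1 then c n else 0) * As n z)"
  by (rule sum.mono_neutral_cong_left) auto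

lemma part3: "total_family H ip As"
proof -
  have "\<forall>f\<in>H. \<forall>e>0. \<exists>N c. hnorm ip (\<lambda>s. f s - (\<Sum>n\<in>{1..N}. c n * As n s)) < e"
  proof (intro ballI allI impI)
    fix f and e :: real assume f: "f \<in> H" and e: "e > 0"
    define S where "S = {g. \<exists>N c. g = (\<lambda>z. \<Sum>n\<in>{1..N}. c n * As n z)}"
    define V where "V g = Re (ip (\<lambda>s. f s - g s) (\<lambda>s. f s - g s))" for g
    define \<delta> where "\<delta> = Inf (V ` S)"
    have SH: "g \<in> H" if "g \<in> S" for g using that by (auto simp: S_def intro!: sum_in As_in)
    have V0: "V g \<ge> 0" if "g \<in> S" for g unfolding V_def by (intro ip_pos diff_in f SH that)
    have zS: "(\<lambda>z. 0) \<in> S" unfolding S_def by (rule CollectI, rule exI[of _ 0]) simp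
    have bdd: "bdd_below (V ` S)" using V0 by (intro bdd_belowI[of _ 0]) auto
    have dle: "\<delta> \<le> V g" if "g \<in> S" for g unfolding \<delta>_def by (rule cInf_lower) (use that bdd in auto)
    have d0: "\<delta> \<ge> 0" using dle[OF zS] V0 unfolding \<delta>_def by (intro cInf_greatest) (use zS in auto)
    have "\<exists>g. g \<in> S \<and> V g < \<delta> + inverse (real (Suc k))" for k
    proof -
      have "Inf (V ` S) < \<delta> + inverse (real (Suc k))" unfolding \<delta>_def by simp
      from cInf_lessD[OF _ this] zS show ?thesis by blast
    qed
    then obtain G where G: "\<And>k. G k \<in> S" "\<And>k. V (G k) < \<delta> + inverse (real (Suc k))" by metis
    have GH: "G k \<in> H" for k by (rule SH[OF G(1)])
    have S_comb: "(\<lambda>z. \<alpha> * g1 z + \<beta> * g2 z) \<in> S" if "g1 \<in> S" "g2 \<in> S" for \<alpha> \<beta> g1 g2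
    proof -
      from that obtain N1 c1 N2 c2 where g1: "g1 = (\<lambda>z. \<Sum>n\<in>{1..N1}. c1 n * As n z)"
        and g2: "g2 = (\<lambda>z. \<Sum>n\<in>{1..N2}. c2 n * As n z)" by (auto simp: S_def)
      define N where "N = max N1 N2"
      have "(\<lambda>z. \<alpha> * g1 z + \<beta> * g2 z) = (\<lambda>z. \<Sum>n\<in>{1..N}. (\<alpha> * (if n \<le> N1 then c1 n else 0) + \<beta> * (if n \<le> N2 then c2 n else 0)) * As n z)"
        unfolding g1 g2 N_def
        by (subst S_ext[of N1 "max N1 N2"], simp, subst S_ext[of N2 "max N1 N2"], simp)
           (simp add: sum_distrib_left sum.distrib algebra_simps)
      thus ?thesis unfolding S_def by (intro CollectI) (rule exI, rule exI, assumption)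
    qed
    have S_single: "(\<lambda>z. As n z) \<in> S" if "n \<ge> 1" for n
    proof -
      have "(\<lambda>z. As n z) = (\<lambda>z. \<Sum>m\<in>{1..n}. (if m = n then 1 else 0) * As m z)"
      proof (rule ext)
        fix z
        have "(\<Sum>m\<in>{1..n}. (if m = n then 1 else 0) * As m z) = (\<Sum>m\<in>{1..n}. if m = n then As m z else 0)"
          by (rule sum.cong) auto
        also have "\<dots> = As n z" using that by (subst sum.delta) auto
        finally show "As n z = (\<Sum>m\<in>{1..n}. (if m = n then 1 else 0) * As m z)" by simp
      qed
      thus ?thesis unfolding S_def by (intro CollectI) (rule exI, rule exI, assumption)
    qed
    have Cb: "Re (ip (\<lambda>s. G i s - G j s) (\<lambda>s. G i s - G j s)) \<le> 2 * inverse (real (Suc i)) + 2 * inverse (real (Suc j))" for i j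
    proof -
      define u where "u = (\<lambda>s. f s - G j s)"
      define v where "v = (\<lambda>s. f s - G i s)"
      define mid where "mid = (\<lambda>z. (1/2) * G i z + (1/2) * G j z)"
      have uH: "u \<in> H" and vH: "v \<in> H" unfolding u_def v_def by (auto intro: diff_in f GH)
      have midS: "mid \<in> S" unfolding mid_def by (intro S_comb G)
      have wH: "(\<lambda>s. f s - mid s) \<in> H" by (intro diff_in f SH midS)
      have e1: "(\<lambda>s. u s - v s) = (\<lambda>s. G i s - G j s)" by (auto simp: u_def v_def)
      have e2: "(\<lambda>s. u s + v s) = (\<lambda>s. 2 * (f s - mid s))" by (auto simp: u_def v_def mid_def algebra_simps)
      have "ip (\<lambda>s. 2 * (f s - mid s)) (\<lambda>s. 2 * (f s - mid s)) = 2 * ip (\<lambda>s. f s - mid s) (\<lambda>s. 2 * (f s - mid s))"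
        by (rule ip_scale[OF wH scale_in[OF wH]])
      also have "ip (\<lambda>s. f s - mid s) (\<lambda>s. 2 * (f s - mid s)) = cnj 2 * ip (\<lambda>s. f s - mid s) (\<lambda>s. f s - mid s)"
        by (rule ip_scale_r[OF wH wH])
      finally have e3: "Re (ip (\<lambda>s. u s + v s) (\<lambda>s. u s + v s)) = 4 * V mid" unfolding e2 V_def by simp
      have P: "Re (ip (\<lambda>s. G i s - G j s) (\<lambda>s. G i s - G j s)) + 4 * V mid = 2 * V (G j) + 2 * V (G i)"
      proof -
        have "Re (ip (\<lambda>s. u s - v s) (\<lambda>s. u s - v s)) + Re (ip (\<lambda>s. u s + v s) (\<lambda>s. u s + v s))
              = 2 * Re (ip u u) + 2 * Re (ip v v)"
          using arg_cong[OF parallelogram[OF uH vH], of Re] by simp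
        thus ?thesis unfolding e1 e3 by (simp add: V_def u_def v_def)
      qed
      show ?thesis using P dle[OF midS] G(2)[of i] G(2)[of j] by linarith
    qed
    have C: "((\<lambda>(i,j). Re (ip (\<lambda>s. G i s - G j s) (\<lambda>s. G i s - G j s))) \<longlongrightarrow> 0) (sequentially \<times>\<^sub>F sequentially)"
    proof (rule tendsto_sandwich[where f = "\<lambda>_. 0" and h = "\<lambda>p. 2 * inverse (real (Suc (fst p))) + 2 * inverse (real (Suc (snd p)))"])
      show "eventually (\<lambda>p. 0 \<le> (\<lambda>(i,j). Re (ip (\<lambda>s. G i s - G j s) (\<lambda>s. G i s - G j s))) p) (sequentially \<times>\<^sub>F sequentially)"
        by (intro always_eventually) (auto intro!: ip_pos diff_in GH)
      show "eventually (\<lambda>p. (\<lambda>(i,j). Re (ip (\<lambda>s. G i s - G j s) (\<lambda>s. G i s - G j s))) p \<le> 2 * inverse (real (Suc (fst p))) + 2 * inverse (real (Suc (snd p)))) (sequentially \<times>\<^sub>F sequentially)"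
        by (intro always_eventually) (auto simp del: of_nat_Suc intro: Cb)
      have l: "(\<lambda>k. inverse (real (Suc k))) \<longlonglongrightarrow> 0" by (rule LIMSEQ_inverse_real_of_nat)
      show "((\<lambda>p. 2 * inverse (real (Suc (fst p))) + 2 * inverse (real (Suc (snd p)))) \<longlongrightarrow> 0) (sequentially \<times>\<^sub>F sequentially)"
        using tendsto_add[OF tendsto_mult[OF tendsto_const filterlim_compose[OF l filterlim_fst]]
                             tendsto_mult[OF tendsto_const filterlim_compose[OF l filterlim_snd]], of 2 2] by simp
    qed simp
    obtain g where g: "g \<in> H" and glim: "(\<lambda>k. hnorm ip (\<lambda>s. G k s - g s)) \<longlonglongrightarrow> 0"
      using cauchy_limit[OF GH C] by blast
    define h where "h = (\<lambda>s. f s - g s)"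
    have hH: "h \<in> H" unfolding h_def by (rule diff_in[OF f g])
    have glim': "(\<lambda>k. hnorm ip (\<lambda>s. g s - G k s)) \<longlonglongrightarrow> 0" using glim neg_diff_hnorm[OF GH g] by simp
    have VGh: "(\<lambda>k. V (G k)) \<longlonglongrightarrow> Re (ip h h)"
    proof -
      have "(\<lambda>k. ip (\<lambda>s. f s - G k s) (\<lambda>s. f s - G k s)) \<longlonglongrightarrow> ip h h"
        by (rule ip_self_lim) (use glim' in \<open>auto simp: h_def intro: diff_in f GH g\<close>)
      thus ?thesis unfolding V_def by (rule tendsto_Re)
    qed
    have VGd: "(\<lambda>k. V (G k)) \<longlonglongrightarrow> \<delta>"
    proof (rule tendsto_sandwich[where f = "\<lambda>_. \<delta>" and h = "\<lambda>k. \<delta> + inverse (real (Suc k))"])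
      show "eventually (\<lambda>k. \<delta> \<le> V (G k)) sequentially" using dle G(1) by auto
      show "eventually (\<lambda>k. V (G k) \<le> \<delta> + inverse (real (Suc k))) sequentially" by (intro always_eventually allI less_imp_le G(2))
      show "(\<lambda>k. \<delta> + inverse (real (Suc k))) \<longlonglongrightarrow> \<delta>"
        using tendsto_add[OF tendsto_const LIMSEQ_inverse_real_of_nat, of \<delta>] by simp
    qed simp
    have dh: "Re (ip h h) = \<delta>" using LIMSEQ_unique[OF VGh VGd] .
    have orth: "ip h (As n) = 0" if n: "n \<ge> 1" for n
    proof -
      have AH: "As n \<in> H" by (rule As_in[OF n])
      have ge: "Re (ip (\<lambda>s. h s - t * As n s) (\<lambda>s. h s - t * As n s)) \<ge> \<delta>" for t
      proof -
        let ?Y = "\<lambda>k. (\<lambda>s. f s - (1 * G k s + t * As n s))"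
        have YS: "(\<lambda>z. 1 * G k z + t * As n z) \<in> S" for k by (intro S_comb G S_single n)
        have YH: "?Y k \<in> H" for k by (intro diff_in f SH YS)
        have "(\<lambda>k. ip (?Y k) (?Y k)) \<longlonglongrightarrow> ip (\<lambda>s. h s - t * As n s) (\<lambda>s. h s - t * As n s)"
        proof (rule ip_self_lim[OF YH])
          show "(\<lambda>s. h s - t * As n s) \<in> H" by (intro diff_in hH scale_in AH)
          have "(\<lambda>s. ?Y k s - (h s - t * As n s)) = (\<lambda>s. g s - G k s)" for k by (auto simp: h_def)
          thus "(\<lambda>k. hnorm ip (\<lambda>s. ?Y k s - (h s - t * As n s))) \<longlonglongrightarrow> 0" using glim' by simp
        qed
        hence "(\<lambda>k. Re (ip (?Y k) (?Y k))) \<longlonglongrightarrow> Re (ip (\<lambda>s. h s - t * As n s) (\<lambda>s. h s - t * As n s))"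
          by (rule tendsto_Re)
        moreover have "eventually (\<lambda>k. \<delta> \<le> Re (ip (?Y k) (?Y k))) sequentially"
          using dle[OF YS] by (auto simp: V_def)
        ultimately show ?thesis by (rule tendsto_lowerbound) simp
      qed
      define p where "p = ip h (As n)"
      define Q where "Q = Re (ip (As n) (As n))"
      have Q0: "Q \<ge> 0" unfolding Q_def by (rule ip_pos[OF AH])
      have AA: "ip (As n) (As n) = of_real Q" unfolding Q_def by (rule ip_self_real[OF AH])
      have Ah: "ip (As n) h = cnj p" unfolding p_def by (rule ip_cnj[OF hH AH])
      define \<epsilon> where "\<epsilon> = 1 / (Q + 1)"
      have eps: "\<epsilon> > 0" "\<epsilon> * Q < 1" using Q0 by (auto simp: \<epsilon>_def field_simps)
      define t where "t = of_real \<epsilon> * p"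
      have pp: "p * cnj p = of_real (norm p ^ 2)" by (rule complex_norm_square[symmetric])
      have "ip (\<lambda>s. h s - t * As n s) (\<lambda>s. h s - t * As n s) = ip h h - cnj t * p - t * cnj p + t * cnj t * of_real Q"
        unfolding ip_expand[OF hH AH] p_def[symmetric] Ah AA ..
      also have "\<dots> = ip h h - of_real (2 * \<epsilon> * norm p ^ 2) + of_real (\<epsilon>^2 * norm p ^ 2 * Q)"
      proof -
        have c1: "cnj t * p = of_real \<epsilon> * (p * cnj p)" by (simp add: t_def mult_ac)
        have c2: "t * cnj p = of_real \<epsilon> * (p * cnj p)" by (simp add: t_def mult_ac)
        have c3: "t * cnj t * of_real Q = of_real \<epsilon> * of_real \<epsilon> * of_real Q * (p * cnj p)" by (simp add: t_def mult_ac)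
        show ?thesis unfolding c1 c2 c3 pp by (simp add: power2_eq_square algebra_simps)
      qed
      finally have "Re (ip (\<lambda>s. h s - t * As n s) (\<lambda>s. h s - t * As n s)) = \<delta> - 2 * \<epsilon> * norm p ^ 2 + \<epsilon>^2 * norm p ^ 2 * Q"
        using dh by simp
      with ge[of t] have "0 \<le> \<epsilon> * norm p ^ 2 * (\<epsilon> * Q - 2)" by (simp add: algebra_simps power2_eq_square)
      moreover have "\<epsilon> * Q - 2 < 0" using eps by simp
      ultimately have "\<epsilon> * norm p ^ 2 \<le> 0"
      proof -
        assume A: "0 \<le> \<epsilon> * norm p ^ 2 * (\<epsilon> * Q - 2)" and B: "\<epsilon> * Q - 2 < 0"
        show ?thesis
        proof (rule ccontr)
          assume "\<not> \<epsilon> * norm p ^ 2 \<le> 0"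
          hence "\<epsilon> * norm p ^ 2 > 0" by simp
          hence "\<epsilon> * norm p ^ 2 * (\<epsilon> * Q - 2) < 0" using B by (rule mult_pos_neg)
          thus False using A by simp
        qed
      qed
      hence "norm p ^ 2 \<le> 0" using eps by (simp add: mult_le_0_iff)
      thus ?thesis unfolding p_def by simp
    qed
    have h0: "h = (\<lambda>s. 0)"
    proof
      fix s show "h s = 0"
      proof (cases "s \<in> D")
        case True
        have "(\<lambda>n. ip h (As (Suc n)) * dpow (Suc n) s) sums h s" by (rule part2[OF hH True])
        moreover have "(\<lambda>n. ip h (As (Suc n)) * dpow (Suc n) s) = (\<lambda>n. 0)" by (auto simp: orth)
        ultimately have "(\<lambda>n. 0) sums h s" by simp
        thus ?thesis using sums_unique2[OF sums_zero] by metis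
      next
        case False thus ?thesis by (rule vanish[OF hH])
      qed
    qed
    have "\<delta> = 0" using dh unfolding h0 by (simp add: ip_zero zero_in)
    obtain k where k: "inverse (real (Suc k)) < e^2" using reals_Archimedean[of "e^2"] e by auto
    have Vk: "V (G k) < e^2" using G(2)[of k] k \<open>\<delta> = 0\<close> by simp
    obtain N c where Gk: "G k = (\<lambda>z. \<Sum>n\<in>{1..N}. c n * As n z)" using G(1)[of k] by (auto simp: S_def)
    have "hnorm ip (\<lambda>s. f s - G k s) < e"
    proof -
      have "sqrt (V (G k)) < sqrt (e^2)" using Vk by (rule real_sqrt_less_mono)
      thus ?thesis using e by (simp add: hnorm_def V_def)
    qed
    thus "\<exists>N c. hnorm ip (\<lambda>s. f s - (\<Sum>n\<in>{1..N}. c n * As n s)) < e" unfolding Gk by blast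
  qed
  thus ?thesis unfolding total_family_def using As_in by blast
qed

end



theorem theorem2p9:
  fixes \<rho> :: real and a :: "nat \<Rightarrow> nat \<Rightarrow> complex"
    and H :: "(complex \<Rightarrow> complex) set"
    and ip :: "(complex \<Rightarrow> complex) \<Rightarrow> (complex \<Rightarrow> complex) \<Rightarrow> complex"
  assumes kernel: "dirichlet_series_kernel \<rho> a"
    and psd: "psd_kernel (halfplane \<rho>) (dkernel a)"
    and rkhs: "is_rkhs \<rho> (dkernel a) H ip"
  shows "(\<forall>s\<in>halfplane \<rho>. \<forall>u\<in>halfplane \<rho>.
            (\<lambda>n. analytic_symbol a (Suc n) s * dpow (Suc n) (cnj u)) sums dkernel a s u)
       \<and> (\<forall>f\<in>H. \<forall>s\<in>halfplane \<rho>.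
            (\<lambda>n. ip f (restr \<rho> (analytic_symbol a (Suc n))) * dpow (Suc n) s) sums f s)
       \<and> total_family H ip (\<lambda>n. restr \<rho> (analytic_symbol a n))"
proof -
  interpret dks \<rho> H ip a
    using kernel rkhs by unfold_locales (auto simp: is_rkhs_def)
  have AsE: "(\<lambda>n. restr \<rho> (analytic_symbol a n)) = As" by (rule ext) (simp add: As_def)
  show ?thesis
  proof (intro conjI ballI)
    fix s u assume "s \<in> halfplane \<rho>" "u \<in> halfplane \<rho>"
    thus "(\<lambda>n. analytic_symbol a (Suc n) s * dpow (Suc n) (cnj u)) sums dkernel a s u"
      by (rule part1)
  next
    fix f s assume "f \<in> H" "s \<in> halfplane \<rho>"
    thus "(\<lambda>n. ip f (restr \<rho> (analytic_symbol a (Suc n))) * dpow (Suc n) s) sums f s"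
      using part2 by (simp add: As_def)
  next
    show "total_family H ip (\<lambda>n. restr \<rho> (analytic_symbol a n))" unfolding AsE by (rule part3)
  qed
qed

end
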